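(* Let $r>0$ and $\theta>0$ be constants and $q<0$. Let $\tilde U\in C((0,\infty))$ satisfy $$\lim_{y\to\infty}\tilde U(y)=0,\qquad \lim_{y\to0}\frac{\tilde U(y)}{y^q}=1.$$ For $\tau>0$, $y>0$ let $$v(\tau,y)=E\Big[\tilde U\big(y\,e^{-(r+\theta^2/2)\tau-\theta W_\tau}\big)\Big],$$ where $W$ is a standard one-dimensional Brownian motion; $v$ is the solution of $v_\tau-\frac12\theta^2y^2v_{yy}+ryv_y=0$ on $(0,\infty)\times(0,\infty)$ with $v(0,y)=\tilde U(y)$. Then $$\lim_{y\to\infty}v(\tau,y)=0,\quad \lim_{y\to\infty}y\,v_y(\tau,y)=0,\quad \lim_{y\to\infty}y^2v_{yy}(\tau,y)=0,$$ and $$\lim_{y\to0}\frac{v(\tau,y)}{e^{\lambda\tau}y^q}=1,\quad \lim_{y\to0}\frac{v_y(\tau,y)}{e^{\lambda\tau}y^{q-1}}=q,\quad \lim_{y\to0}\frac{v_{yy}(\tau,y)}{e^{\lambda\tau}y^{q-2}}=q(q-1),$$ where $\lambda=\frac12\theta^2q(q-1)-rq$. The convergence is uniform for $\tau\in[\tau_0,\tau_1]$, for any $0<\tau_0<\tau_1$.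
   Context: In the paper, $v$ is the dual value function (as a function of time to maturity $\tau$) for a market with one riskless asset with rate $r$ and one stock $dS=\mu S\,dt+\sigma S\,dW$, $\theta=(\mu-r)/\sigma$; it equals the probabilistic representation given in the claim. *)

theory Defs
  imports "HOL-Probability.Probability"
begin

text \<open>Law of the standard Brownian motion at time tau: N(0, tau).
  normal_density takes the standard deviation as its second argument.\<close>
definition bm_law :: "real \<Rightarrow> real measure" where
  "bm_law \<tau> = density lborel (normal_density 0 (sqrt \<tau>))"

definition dual_v :: "real \<Rightarrow> real \<Rightarrow> (real \<Rightarrow> real) \<Rightarrow> real \<Rightarrow> real \<Rightarrow> real" where
  "dual_v r \<theta> U \<tau> y =
     (\<integral>w. U (y * exp (- (r + \<theta>\<^sup>2 / 2) * \<tau> - \<theta> * w)) \<partial>bm_law \<tau>)"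

definition dual_lambda :: "real \<Rightarrow> real \<Rightarrow> real \<Rightarrow> real" where
  "dual_lambda r \<theta> q = \<theta>\<^sup>2 * q * (q - 1) / 2 - r * q"

end

theory Submission
  imports Defs
begin
lemma DCT_ev:
  fixes s :: "nat \<Rightarrow> real \<Rightarrow> real" and f w :: "real \<Rightarrow> real"
  assumes "f \<in> borel_measurable lborel" "\<And>i. s i \<in> borel_measurable lborel" "integrable lborel w"
    and lim: "\<And>x. (\<lambda>i. s i x) \<longlonglongrightarrow> f x"
    and bound: "eventually (\<lambda>i. \<forall>x. \<bar>s i x\<bar> \<le> w x) sequentially"
  shows "(\<lambda>i. integral\<^sup>L lborel (s i)) \<longlonglongrightarrow> integral\<^sup>L lborel f"
proof -
  from bound obtain N where N: "\<And>i. i \<ge> N \<Longrightarrow> \<forall>x. \<bar>s i x\<bar> \<le> w x"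
    by (auto simp: eventually_sequentially)
  show ?thesis
  proof (rule LIMSEQ_offset[where k=N], rule integral_dominated_convergence[where w=w])
    show "AE x in lborel. (\<lambda>i. s (i + N) x) \<longlonglongrightarrow> f x"
      using lim by (intro AE_I2) (rule LIMSEQ_ignore_initial_segment)
    show "AE x in lborel. norm (s (i + N) x) \<le> w x" for i
      using N[of "i+N"] by auto
  qed (use assms in auto)
qed

lemma phi_exp_eq: "std_normal_density t * exp (c*t) = exp (c^2/2) * normal_density c 1 t"
  unfolding normal_density_def
  by (simp add: mult_exp_exp power2_eq_square field_simps)

lemma int_phi_exp: "integrable lborel (\<lambda>t. std_normal_density t * exp (c*t))"
  unfolding phi_exp_eq by simp

lemma int_phi_expabs: "integrable lborel (\<lambda>t. std_normal_density t * exp (c*\<bar>t\<bar>))"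
proof (rule Bochner_Integration.integrable_bound)
  show "integrable lborel (\<lambda>t. std_normal_density t * exp (c*t) + std_normal_density t * exp ((-c)*t))"
    using int_phi_exp[of c] int_phi_exp[of "-c"] by (rule Bochner_Integration.integrable_add)
  show "(\<lambda>t. std_normal_density t * exp (c*\<bar>t\<bar>)) \<in> borel_measurable lborel" by measurable
  show "AE x in lborel. norm (std_normal_density x * exp (c * \<bar>x\<bar>))
          \<le> norm (std_normal_density x * exp (c * x) + std_normal_density x * exp (- c * x))"
  proof (intro AE_I2)
    fix x :: real
    have "exp (c * \<bar>x\<bar>) \<le> exp (c * x) + exp (- c * x)"
      by (cases "x \<ge> 0") (auto simp: add_increasing add_increasing2)
    then have "std_normal_density x * exp (c * \<bar>x\<bar>) \<le> std_normal_density x * (exp (c * x) + exp (- c * x))"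
      by (intro mult_left_mono) auto
    then show "norm (std_normal_density x * exp (c * \<bar>x\<bar>))
          \<le> norm (std_normal_density x * exp (c * x) + std_normal_density x * exp (- c * x))"
      by (simp add: algebra_simps)
  qed
qed

lemma DUI:
  fixes F F' :: "real \<Rightarrow> real \<Rightarrow> real" and w :: "real \<Rightarrow> real"
  assumes int: "\<And>x. integrable lborel (F x)"
   and der: "\<And>x t. ((\<lambda>x. F x t) has_real_derivative F' x t) (at x)"
   and meas: "F' x0 \<in> borel_measurable lborel"
   and wint: "integrable lborel w"
   and bound: "\<And>x t. \<bar>x - x0\<bar> \<le> 1 \<Longrightarrow> \<bar>F' x t\<bar> \<le> w t"
  shows "((\<lambda>x. \<integral>t. F x t \<partial>lborel) has_real_derivative (\<integral>t. F' x0 t \<partial>lborel)) (at x0)"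
  unfolding has_field_derivative_iff tendsto_at_iff_sequentially
proof (intro allI impI)
  fix X :: "nat \<Rightarrow> real" assume X: "\<forall>i. X i \<in> UNIV - {x0}" "X \<longlonglongrightarrow> x0"
  have eq: "((\<integral>t. F (X i) t \<partial>lborel) - (\<integral>t. F x0 t \<partial>lborel)) / (X i - x0)
      = (\<integral>t. (F (X i) t - F x0 t) / (X i - x0) \<partial>lborel)" for i
    using int by (simp add: integral_diff)
  have "(\<lambda>i. \<integral>t. (F (X i) t - F x0 t) / (X i - x0) \<partial>lborel) \<longlonglongrightarrow> (\<integral>t. F' x0 t \<partial>lborel)"
  proof (rule DCT_ev[where w=w])
    show "(\<lambda>t. (F (X i) t - F x0 t) / (X i - x0)) \<in> borel_measurable lborel" for i
      using int[of "X i"] int[of x0] by (intro borel_measurable_divide borel_measurable_diff) (auto dest: borel_measurable_integrable)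
    show "(\<lambda>i. (F (X i) t - F x0 t) / (X i - x0)) \<longlonglongrightarrow> F' x0 t" for t
    proof -
      have "((\<lambda>y. (F y t - F x0 t) / (y - x0)) \<longlongrightarrow> F' x0 t) (at x0)"
        using der[of t x0] by (simp add: has_field_derivative_iff)
      then show ?thesis using X unfolding tendsto_at_iff_sequentially by (auto simp: o_def)
    qed
    have "eventually (\<lambda>i. dist (X i) x0 < 1) sequentially"
      using X(2) by (rule tendstoD) simp
    then show "eventually (\<lambda>i. \<forall>t. \<bar>(F (X i) t - F x0 t) / (X i - x0)\<bar> \<le> w t) sequentially"
    proof eventually_elim
      case (elim i)
      show ?case
      proof
        fix t
        have "norm (F (X i) t - F x0 t) \<le> w t * norm (X i - x0)"
        proof (rule field_differentiable_bound[where S="cball x0 1"])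
          show "((\<lambda>x. F x t) has_field_derivative F' z t) (at z within cball x0 1)" for z
            using der by (rule has_field_derivative_at_within)
          show "norm (F' z t) \<le> w t" if "z \<in> cball x0 1" for z
            using bound[of z t] that by (simp add: dist_real_def abs_minus_commute)
        qed (use elim in \<open>auto simp: dist_real_def abs_minus_commute\<close>)
        moreover have "X i \<noteq> x0" using X(1) by auto
        ultimately show "\<bar>(F (X i) t - F x0 t) / (X i - x0)\<bar> \<le> w t"
          by (simp add: abs_divide divide_le_eq)
      qed
    qed
  qed (use meas wint in auto)
  then show "((\<lambda>y. ((\<integral>t. F y t \<partial>lborel) - (\<integral>t. F x0 t \<partial>lborel)) / (y - x0)) \<circ> X) \<longlonglongrightarrow> (\<integral>t. F' x0 t \<partial>lborel)"
    by (simp add: o_def eq)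
qed

lemma unif_top:
  fixes F :: "real \<Rightarrow> real \<Rightarrow> real" and L :: "real \<Rightarrow> real"
  assumes K: "compact K" and L: "continuous_on K L"
  and H: "\<And>Y T \<tau>. (\<And>n. T n \<in> K) \<Longrightarrow> T \<longlonglongrightarrow> \<tau> \<Longrightarrow> \<tau> \<in> K \<Longrightarrow> filterlim Y at_top sequentially
            \<Longrightarrow> (\<And>n. Y n > 0) \<Longrightarrow> (\<lambda>n. F (Y n) (T n)) \<longlonglongrightarrow> L \<tau>"
  shows "uniform_limit K F L at_top"
proof (rule uniform_limitI)
  fix e :: real assume e: "0 < e"
  show "\<forall>\<^sub>F y in at_top. \<forall>\<tau>\<in>K. dist (F y \<tau>) (L \<tau>) < e"
  proof (rule ccontr)
    assume "\<not> ?thesis"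
    then have "\<forall>N. \<exists>y\<ge>N. \<exists>\<tau>\<in>K. \<not> dist (F y \<tau>) (L \<tau>) < e"
      by (auto simp: eventually_at_top_linorder)
    then have "\<forall>n::nat. \<exists>y\<ge>real n + 1. \<exists>\<tau>\<in>K. \<not> dist (F y \<tau>) (L \<tau>) < e" by blast
    then obtain Y T where Y: "\<And>n. Y n \<ge> real n + 1" and T: "\<And>n. T n \<in> K"
      and d: "\<And>n. \<not> dist (F (Y n) (T n)) (L (T n)) < e"
      by metis
    from K have "seq_compact K" by (simp add: compact_eq_seq_compact_metric)
    then obtain l r where l: "l \<in> K" and r: "strict_mono r" and Tr: "(T \<circ> r) \<longlonglongrightarrow> l"
      using T by (metis seq_compactE)
    have "filterlim Y at_top sequentially"
    proof (rule filterlim_at_top_mono[OF filterlim_real_sequentially])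
      show "\<forall>\<^sub>F x in sequentially. real x \<le> Y x"
      proof (intro always_eventually allI)
        fix x show "real x \<le> Y x" using Y[of x] by linarith
      qed
    qed
    then have Ytop: "filterlim (Y \<circ> r) at_top sequentially"
      unfolding o_def by (rule filterlim_compose[OF _ filterlim_subseq[OF r]])
    have Ypos: "(Y \<circ> r) n > 0" for n using Y[of "r n"] by simp
    have 1: "(\<lambda>n. F ((Y \<circ> r) n) ((T \<circ> r) n)) \<longlonglongrightarrow> L l"
      by (rule H[OF _ Tr l Ytop Ypos]) (simp add: T)
    have 2: "(\<lambda>n. L ((T \<circ> r) n)) \<longlonglongrightarrow> L l"
      using L Tr l by (rule continuous_on_tendsto_compose) (simp add: T)
    have "(\<lambda>n. dist (F ((Y \<circ> r) n) ((T \<circ> r) n)) (L ((T \<circ> r) n))) \<longlonglongrightarrow> dist (L l) (L l)"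
      by (rule tendsto_dist[OF 1 2])
    then have "eventually (\<lambda>n. dist (F ((Y \<circ> r) n) ((T \<circ> r) n)) (L ((T \<circ> r) n)) < e) sequentially"
      using e by (intro order_tendstoD(2)) auto
    then show False using d by (auto simp: eventually_sequentially)
  qed
qed

lemma unif_right0:
  fixes F :: "real \<Rightarrow> real \<Rightarrow> real" and L :: "real \<Rightarrow> real"
  assumes K: "compact K" and L: "continuous_on K L"
  and H: "\<And>Y T \<tau>. (\<And>n. T n \<in> K) \<Longrightarrow> T \<longlonglongrightarrow> \<tau> \<Longrightarrow> \<tau> \<in> K \<Longrightarrow> filterlim Y (at_right 0) sequentially
            \<Longrightarrow> (\<And>n. Y n > 0) \<Longrightarrow> (\<lambda>n. F (Y n) (T n)) \<longlonglongrightarrow> L \<tau>"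
  shows "uniform_limit K F L (at_right 0)"
proof (rule uniform_limitI)
  fix e :: real assume e: "0 < e"
  show "\<forall>\<^sub>F y in at_right 0. \<forall>\<tau>\<in>K. dist (F y \<tau>) (L \<tau>) < e"
  proof (rule ccontr)
    assume "\<not> ?thesis"
    then have B: "\<forall>b>0. \<exists>y>0. y < b \<and> (\<exists>\<tau>\<in>K. \<not> dist (F y \<tau>) (L \<tau>) < e)"
      by (auto simp: eventually_at_right_field)
    have "\<forall>n::nat. \<exists>y>0. y < 1 / (real n + 1) \<and> (\<exists>\<tau>\<in>K. \<not> dist (F y \<tau>) (L \<tau>) < e)"
    proof
      fix n :: nat
      have "1 / (real n + 1) > 0" by simp
      then show "\<exists>y>0. y < 1 / (real n + 1) \<and> (\<exists>\<tau>\<in>K. \<not> dist (F y \<tau>) (L \<tau>) < e)"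
        using B by blast
    qed
    then obtain Y T where Y: "\<And>n. Y n > 0" "\<And>n. Y n < 1 / (real n + 1)" and T: "\<And>n. T n \<in> K"
      and d: "\<And>n. \<not> dist (F (Y n) (T n)) (L (T n)) < e"
      by metis
    from K have "seq_compact K" by (simp add: compact_eq_seq_compact_metric)
    then obtain l r where l: "l \<in> K" and r: "strict_mono r" and Tr: "(T \<circ> r) \<longlonglongrightarrow> l"
      using T by (metis seq_compactE)
    have lim: "(\<lambda>n. 1 / (real n + 1)) \<longlonglongrightarrow> 0" using LIMSEQ_inverse_real_of_nat by (simp add: inverse_eq_divide add.commute)
    have "Y \<longlonglongrightarrow> 0"
      by (rule tendsto_sandwich[OF _ _ tendsto_const lim]) (use Y in \<open>auto intro!: always_eventually less_imp_le\<close>)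
    then have "filterlim Y (at_right 0) sequentially"
      using Y(1) by (intro tendsto_imp_filterlim_at_right) auto
    then have Ytop: "filterlim (Y \<circ> r) (at_right 0) sequentially"
      unfolding o_def by (rule filterlim_compose[OF _ filterlim_subseq[OF r]])
    have Ypos: "(Y \<circ> r) n > 0" for n using Y(1)[of "r n"] by simp
    have 1: "(\<lambda>n. F ((Y \<circ> r) n) ((T \<circ> r) n)) \<longlonglongrightarrow> L l"
      by (rule H[OF _ Tr l Ytop Ypos]) (simp add: T)
    have 2: "(\<lambda>n. L ((T \<circ> r) n)) \<longlonglongrightarrow> L l"
      using L Tr l by (rule continuous_on_tendsto_compose) (simp add: T)
    have "(\<lambda>n. dist (F ((Y \<circ> r) n) ((T \<circ> r) n)) (L ((T \<circ> r) n))) \<longlonglongrightarrow> dist (L l) (L l)"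
      by (rule tendsto_dist[OF 1 2])
    then have "eventually (\<lambda>n. dist (F ((Y \<circ> r) n) ((T \<circ> r) n)) (L ((T \<circ> r) n)) < e) sequentially"
      using e by (intro order_tendstoD(2)) auto
    then show False using d by (auto simp: eventually_sequentially)
  qed
qed

definition TT :: "(real \<Rightarrow> real) \<Rightarrow> real \<Rightarrow> (real \<Rightarrow> real) \<Rightarrow> real \<Rightarrow> real" where
  "TT f s Q x = (\<integral>t. f (x - s*t) * Q t * std_normal_density t \<partial>lborel)"

lemma phi_deriv: "(std_normal_density has_real_derivative (- u * std_normal_density u)) (at u)"
  unfolding normal_density_def
  by (auto intro!: derivative_eq_intros simp: field_simps power2_eq_square)

lemma phi_shift:
  assumes "\<bar>d\<bar> \<le> D"
  shows "std_normal_density (u + d) \<le> std_normal_density u * exp (D * \<bar>u\<bar>)"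
proof -
  have "- (u + d)\<^sup>2 / 2 \<le> - u\<^sup>2 / 2 + D * \<bar>u\<bar>"
  proof -
    have "- u * d \<le> \<bar>u\<bar> * \<bar>d\<bar>" by (metis abs_ge_minus_self abs_mult mult_minus_left)
    also have "\<dots> \<le> \<bar>u\<bar> * D" using assms by (intro mult_left_mono) auto
    finally have "- u * d \<le> D * \<bar>u\<bar>" by (simp add: mult.commute)
    moreover have "d^2 \<ge> 0" by simp
    moreover have "- (u + d)\<^sup>2 / 2 = - u\<^sup>2 / 2 + (- u * d) - d^2/2" by (simp add: power2_eq_square field_simps)
    ultimately show ?thesis by linarith
  qed
  then have "exp (- (u + d)\<^sup>2 / 2) \<le> exp (- u\<^sup>2 / 2) * exp (D * \<bar>u\<bar>)"
    by (simp add: mult_exp_exp)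
  then show ?thesis unfolding std_normal_density_def
    by (simp add: mult.assoc divide_right_mono)
qed

lemma C_nonneg: fixes h :: "real \<Rightarrow> real" assumes "\<And>z. \<bar>h z\<bar> \<le> C * (1 + exp (q*z))" shows "C \<ge> 0"
proof -
  have "\<bar>h 0\<bar> \<le> C * 2" using assms[of 0] by simp
  then show ?thesis using abs_ge_zero[of "h 0"] by linarith
qed

lemma int_T:
  fixes h Q :: "real \<Rightarrow> real"
  assumes hc: "continuous_on UNIV h" and hb: "\<And>z. \<bar>h z\<bar> \<le> C * (1 + exp (q*z))"
    and Qm: "Q \<in> borel_measurable borel" and Qb: "\<And>t. \<bar>Q t\<bar> \<le> B * exp (K*\<bar>t\<bar>)"
    and s: "s \<ge> 0"
  shows "integrable lborel (\<lambda>t. h (x - s*t) * Q t * std_normal_density t)"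
proof (rule Bochner_Integration.integrable_bound)
  have C0: "C \<ge> 0" by (rule C_nonneg[OF hb])
  have B0: "B \<ge> 0" using Qb[of 0] abs_ge_zero[of "Q 0"] by simp
  have hm[measurable]: "h \<in> borel_measurable borel" by (rule borel_measurable_continuous_onI[OF hc])
  note Qm[measurable]
  show "integrable lborel (\<lambda>t. (C * (1 + exp (q*x)) * B) * (std_normal_density t * exp ((s*\<bar>q\<bar> + K) * \<bar>t\<bar>)))"
    by (intro integrable_mult_right int_phi_expabs)
  show "(\<lambda>t. h (x - s*t) * Q t * std_normal_density t) \<in> borel_measurable lborel" by measurable
  show "AE t in lborel. norm (h (x - s*t) * Q t * std_normal_density t)
      \<le> norm ((C * (1 + exp (q*x)) * B) * (std_normal_density t * exp ((s*\<bar>q\<bar> + K) * \<bar>t\<bar>)))"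
  proof (intro AE_I2)
    fix t
    have e1: "exp (q * (x - s*t)) \<le> exp (q*x) * exp (s*\<bar>q\<bar>*\<bar>t\<bar>)"
    proof -
      have "- (s*q*t) \<le> s*\<bar>q\<bar>*\<bar>t\<bar>"
        using s by (metis abs_ge_minus_self abs_mult abs_of_nonneg)
      have "exp (q*(x - s*t)) = exp (q*x) * exp (-(s*q*t))" by (simp add: mult_exp_exp algebra_simps)
      also have "\<dots> \<le> exp (q*x) * exp (s*\<bar>q\<bar>*\<bar>t\<bar>)" using \<open>- (s*q*t) \<le> _\<close> by simp
      finally show ?thesis .
    qed
    have e2: "1 \<le> exp (s*\<bar>q\<bar>*\<bar>t\<bar>)" using s by simp
    have "\<bar>h (x - s*t)\<bar> \<le> C * (1 + exp (q*x)) * exp (s*\<bar>q\<bar>*\<bar>t\<bar>)"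
    proof -
      have "\<bar>h (x - s*t)\<bar> \<le> C * (1 + exp (q * (x - s*t)))" by (rule hb)
      also have "\<dots> \<le> C * (exp (s*\<bar>q\<bar>*\<bar>t\<bar>) + exp (q*x) * exp (s*\<bar>q\<bar>*\<bar>t\<bar>))"
        by (rule mult_left_mono[OF add_mono[OF e2 e1] C0])
      finally show ?thesis by (simp add: algebra_simps)
    qed
    moreover have "\<bar>Q t\<bar> \<le> B * exp (K*\<bar>t\<bar>)" by (rule Qb)
    ultimately have "\<bar>h (x - s*t)\<bar> * \<bar>Q t\<bar> \<le> (C * (1 + exp (q*x)) * exp (s*\<bar>q\<bar>*\<bar>t\<bar>)) * (B * exp (K*\<bar>t\<bar>))"
      by (intro mult_mono) (auto simp: C0)
    also have "\<dots> = (C * (1 + exp (q*x)) * B) * exp ((s*\<bar>q\<bar> + K) * \<bar>t\<bar>)"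
      by (simp add: mult_exp_exp[symmetric] algebra_simps)
    finally have *: "\<bar>h (x - s*t)\<bar> * \<bar>Q t\<bar> \<le> (C * (1 + exp (q*x)) * B) * exp ((s*\<bar>q\<bar> + K) * \<bar>t\<bar>)" .
    have "\<bar>h (x - s*t)\<bar> * \<bar>Q t\<bar> * std_normal_density t \<le> (C * (1 + exp (q*x)) * B) * exp ((s*\<bar>q\<bar> + K) * \<bar>t\<bar>) * std_normal_density t"
      by (rule mult_right_mono[OF *]) simp
    then show "norm (h (x - s*t) * Q t * std_normal_density t)
      \<le> norm ((C * (1 + exp (q*x)) * B) * (std_normal_density t * exp ((s*\<bar>q\<bar> + K) * \<bar>t\<bar>)))"
      using C0 B0 by (simp add: abs_mult algebra_simps)
  qed
qed

lemma int_shift: fixes g :: "real \<Rightarrow> real" shows "integrable lborel g \<Longrightarrow> integrable lborel (\<lambda>t. g (a + t))"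
  using lborel_integrable_real_affine[of g 1 a] by simp

lemma TT_shift:
  assumes s: "s > 0"
  shows "TT f s Q x = (\<integral>t. f (-(s*t)) * (Q (t + x/s) * std_normal_density (t + x/s)) \<partial>lborel)"
proof -
  define g where "g t = f (x - s*t) * Q t * std_normal_density t" for t
  have "TT f s Q x = (\<integral>t. g (x/s + 1*t) \<partial>lborel)"
    using lborel_integral_real_affine[of 1 g "x/s"] by (simp add: TT_def g_def[abs_def])
  also have "\<dots> = (\<integral>t. f (-(s*t)) * (Q (t + x/s) * std_normal_density (t + x/s)) \<partial>lborel)"
  proof (rule Bochner_Integration.integral_cong)
    fix t
    have "x - s * (x/s + t) = -(s*t)" using s by (simp add: field_simps)
    then show "g (x/s + 1*t) = f (-(s*t)) * (Q (t + x/s) * std_normal_density (t + x/s))"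
      by (simp add: g_def add.commute mult.assoc)
  qed simp
  finally show ?thesis .
qed

lemma TT_deriv:
  fixes f Q Q' R :: "real \<Rightarrow> real"
  assumes fc: "continuous_on UNIV f" and fb: "\<And>z. \<bar>f z\<bar> \<le> C*(1+exp(q*z))"
   and s: "s > 0"
   and Qc: "continuous_on UNIV Q" and Rc: "continuous_on UNIV R"
   and Qd: "\<And>u. (Q has_real_derivative Q' u) (at u)"
   and R: "\<And>u. R u = Q' u - u * Q u"
   and Qb: "\<And>u. \<bar>Q u\<bar> \<le> B * exp \<bar>u\<bar>" and Rb: "\<And>u. \<bar>R u\<bar> \<le> B * exp \<bar>u\<bar>"
  shows "((\<lambda>x. TT f s Q x) has_real_derivative TT f s R x0 / s) (at x0)"
proof -
  have fm[measurable]: "f \<in> borel_measurable borel" by (rule borel_measurable_continuous_onI[OF fc])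
  have Qm[measurable]: "Q \<in> borel_measurable borel" by (rule borel_measurable_continuous_onI[OF Qc])
  have Rm[measurable]: "R \<in> borel_measurable borel" by (rule borel_measurable_continuous_onI[OF Rc])
  have B0: "B \<ge> 0" using Qb[of 0] abs_ge_zero[of "Q 0"] by simp
  define F where "F x t = f (-(s*t)) * (Q (t + x/s) * std_normal_density (t + x/s))" for x t
  define F' where "F' x t = f (-(s*t)) * (R (t + x/s) * std_normal_density (t + x/s)) / s" for x t
  define w where "w t = \<bar>f (-(s*t))\<bar> * (B * exp (1/s) / s * exp ((1 + 1/s) * \<bar>t + x0/s\<bar>)) * std_normal_density (t + x0/s)" for t
  have eqT: "TT f s Q x = (\<integral>t. F x t \<partial>lborel)" for x
    unfolding F_def by (rule TT_shift[OF s])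
  have eqR: "TT f s R x0 / s = (\<integral>t. F' x0 t \<partial>lborel)"
    unfolding F'_def TT_shift[OF s] by simp
  have "((\<lambda>x. \<integral>t. F x t \<partial>lborel) has_real_derivative (\<integral>t. F' x0 t \<partial>lborel)) (at x0)"
  proof (rule DUI[where w=w])
    fix x
    have "integrable lborel (\<lambda>u. f (x - s*u) * Q u * std_normal_density u)"
      by (rule int_T[OF fc fb Qm, of B 1]) (use Qb s in auto)
    from int_shift[OF this, of "x/s"]
    show "integrable lborel (F x)"
    proof (rule Bochner_Integration.integrable_cong[THEN iffD1, rotated 2])
      fix t
      have "x - s * (x/s + t) = -(s*t)" using s by (simp add: field_simps)
      then show "f (x - s * (x / s + t)) * Q (x / s + t) * std_normal_density (x / s + t) = F x t"
        by (simp add: F_def add.commute mult.assoc)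
    qed simp
  next
    fix x t
    have d1: "((\<lambda>x. t + x/s) has_real_derivative 1/s) (at x)"
      using s by (auto intro!: derivative_eq_intros)
    have dQ: "((\<lambda>x. Q (t + x/s)) has_real_derivative Q' (t + x/s) * (1/s)) (at x)"
      by (rule DERIV_chain2[OF Qd d1])
    have dP: "((\<lambda>x. std_normal_density (t + x/s)) has_real_derivative (- (t + x/s) * std_normal_density (t + x/s)) * (1/s)) (at x)"
      by (rule DERIV_chain2[OF phi_deriv d1])
    have "((\<lambda>x. f (-(s*t)) * (Q (t + x/s) * std_normal_density (t + x/s))) has_real_derivative
        f (-(s*t)) * (Q' (t + x/s) * (1/s) * std_normal_density (t + x/s) + (- (t + x/s) * std_normal_density (t + x/s)) * (1/s) * Q (t + x/s))) (at x)"
      by (intro DERIV_cmult DERIV_mult dQ dP)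
    note DD = this
    have EE: "f (-(s*t)) * (Q' u * (1/s) * std_normal_density u + (- u * std_normal_density u) * (1/s) * Q u)
       = f (-(s*t)) * (R u * std_normal_density u) / s" for u
      using s by (simp add: R field_simps)
    show "((\<lambda>x. F x t) has_real_derivative F' x t) (at x)"
      unfolding F_def F'_def by (rule DERIV_cong[OF DD EE])
  next
    show "F' x0 \<in> borel_measurable lborel" unfolding F'_def[abs_def] by measurable
  next
    have fac: "continuous_on UNIV (\<lambda>z. \<bar>f z\<bar>)" by (intro continuous_intros fc)
    have "integrable lborel (\<lambda>u. \<bar>f (x0 - s*u)\<bar> * (B * exp (1/s) / s * exp ((1 + 1/s) * \<bar>u\<bar>)) * std_normal_density u)"
      by (rule int_T[OF fac, where C=C and q=q and B="B * exp (1/s) / s" and K="1 + 1/s"]) (use fb s B0 in auto)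
    from int_shift[OF this, of "x0/s"]
    show "integrable lborel w"
    proof (rule Bochner_Integration.integrable_cong[THEN iffD1, rotated 2])
      fix t
      have "x0 - s * (x0/s + t) = -(s*t)" using s by (simp add: field_simps)
      then show "\<bar>f (x0 - s * (x0 / s + t))\<bar> * (B * exp (1 / s) / s * exp ((1 + 1 / s) * \<bar>x0 / s + t\<bar>)) *
         std_normal_density (x0 / s + t) = w t"
        by (simp add: w_def add.commute)
    qed simp
  next
    fix x t assume x: "\<bar>x - x0\<bar> \<le> 1"
    define u0 where "u0 = t + x0/s"
    define d where "d = (x - x0)/s"
    have ud: "t + x/s = u0 + d" by (simp add: u0_def d_def diff_divide_distrib)
    have dle: "\<bar>d\<bar> \<le> 1/s" using x s by (simp add: d_def abs_divide divide_right_mono)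
    have "\<bar>R (u0 + d)\<bar> \<le> B * exp \<bar>u0 + d\<bar>" by (rule Rb)
    also have "\<dots> \<le> B * (exp (1/s) * exp \<bar>u0\<bar>)"
    proof -
      have "\<bar>u0 + d\<bar> \<le> 1/s + \<bar>u0\<bar>" using dle by linarith
      then show ?thesis using B0 by (intro mult_left_mono) (auto simp: mult_exp_exp)
    qed
    finally have r1: "\<bar>R (u0 + d)\<bar> \<le> B * (exp (1/s) * exp \<bar>u0\<bar>)" .
    have p1: "std_normal_density (u0 + d) \<le> std_normal_density u0 * exp (1/s * \<bar>u0\<bar>)"
      by (rule phi_shift[OF dle])
    have "\<bar>R (u0 + d)\<bar> * std_normal_density (u0 + d) \<le> (B * (exp (1/s) * exp \<bar>u0\<bar>)) * (std_normal_density u0 * exp (1/s * \<bar>u0\<bar>))"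
      by (rule mult_mono[OF r1 p1]) (use B0 in auto)
    also have "\<dots> = B * exp (1/s) * exp ((1 + 1/s) * \<bar>u0\<bar>) * std_normal_density u0"
      by (simp add: mult_exp_exp[symmetric] algebra_simps)
    finally have m: "\<bar>R (u0 + d)\<bar> * std_normal_density (u0 + d) \<le> B * exp (1/s) * exp ((1 + 1/s) * \<bar>u0\<bar>) * std_normal_density u0" .
    have "\<bar>F' x t\<bar> = \<bar>f (-(s*t))\<bar> * (\<bar>R (u0 + d)\<bar> * std_normal_density (u0 + d)) / s"
      using s by (simp add: F'_def ud abs_mult abs_divide)
    also have "\<dots> \<le> \<bar>f (-(s*t))\<bar> * (B * exp (1/s) * exp ((1 + 1/s) * \<bar>u0\<bar>) * std_normal_density u0) / s"
      using s by (intro divide_right_mono mult_left_mono m) auto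
    also have "\<dots> = w t" by (simp add: w_def u0_def)
    finally show "\<bar>F' x t\<bar> \<le> w t" .
  qed
  then show ?thesis unfolding eqR[symmetric] eqT[abs_def] .
qed

lemma f_bound_top:
  fixes f :: "real \<Rightarrow> real"
  assumes fb: "\<And>z. \<bar>f z\<bar> \<le> C*(1+exp(q*z))" and q: "q \<le> 0" and X: "X \<ge> 0" and S: "0 \<le> S" "S \<le> smax"
  shows "\<bar>f (X - S*t)\<bar> \<le> 2*C*exp(smax*\<bar>q\<bar>*\<bar>t\<bar>)"
proof -
  have C0: "C \<ge> 0" by (rule C_nonneg[OF fb])
  have "q*(X - S*t) \<le> smax*\<bar>q\<bar>*\<bar>t\<bar>"
  proof -
    have "q*X \<le> 0" using q X by (simp add: mult_nonpos_nonneg)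
    moreover have "- (q*S*t) \<le> S*\<bar>q\<bar>*\<bar>t\<bar>" using S by (metis abs_ge_minus_self abs_mult abs_of_nonneg mult.commute)
    moreover have "S*\<bar>q\<bar>*\<bar>t\<bar> \<le> smax*\<bar>q\<bar>*\<bar>t\<bar>" using S by (intro mult_right_mono) auto
    ultimately show ?thesis by (simp add: algebra_simps)
  qed
  then have "exp (q*(X - S*t)) \<le> exp(smax*\<bar>q\<bar>*\<bar>t\<bar>)" by simp
  moreover have "1 \<le> exp(smax*\<bar>q\<bar>*\<bar>t\<bar>)" using S by simp
  ultimately have "1+exp(q*(X - S*t)) \<le> 2*exp(smax*\<bar>q\<bar>*\<bar>t\<bar>)" by linarith
  then have "C*(1+exp(q*(X - S*t))) \<le> C*(2*exp(smax*\<bar>q\<bar>*\<bar>t\<bar>))" using C0 by (intro mult_left_mono) auto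
  with fb[of "X - S*t"] show ?thesis by simp
qed

lemma f_bound_bot:
  fixes f :: "real \<Rightarrow> real"
  assumes fb: "\<And>z. \<bar>f z\<bar> \<le> C*(1+exp(q*z))" and q: "q \<le> 0" and X: "X \<le> 0" and S: "0 \<le> S" "S \<le> smax"
  shows "\<bar>f (X - S*t) * exp (-(q*X) - q^2*S^2/2)\<bar> \<le> 2*C*exp(smax*\<bar>q\<bar>*\<bar>t\<bar>)"
proof -
  have C0: "C \<ge> 0" by (rule C_nonneg[OF fb])
  have e1: "exp (-(q*X)) \<le> 1" using q X by (simp add: mult_nonpos_nonpos)
  have e2: "exp (-(q*S*t)) \<le> exp(smax*\<bar>q\<bar>*\<bar>t\<bar>)"
  proof -
    have "- (q*S*t) \<le> S*\<bar>q\<bar>*\<bar>t\<bar>" using S by (metis abs_ge_minus_self abs_mult abs_of_nonneg mult.commute)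
    moreover have "S*\<bar>q\<bar>*\<bar>t\<bar> \<le> smax*\<bar>q\<bar>*\<bar>t\<bar>" using S by (intro mult_right_mono) auto
    ultimately show ?thesis by simp
  qed
  have e3: "1 \<le> exp(smax*\<bar>q\<bar>*\<bar>t\<bar>)" using S by simp
  have e4: "exp (-(q^2*S^2/2)) \<le> 1" by simp
  have "\<bar>f (X - S*t) * exp (-(q*X) - q^2*S^2/2)\<bar> = \<bar>f (X - S*t)\<bar> * exp (-(q*X)) * exp (-(q^2*S^2/2))"
    by (simp add: abs_mult mult_exp_exp)
  also have "\<dots> \<le> C*(1+exp(q*(X - S*t))) * exp (-(q*X)) * 1"
    using fb[of "X - S*t"] e4 by (intro mult_mono) auto
  also have "\<dots> = C*(exp (-(q*X)) + exp (-(q*S*t)))"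
    by (simp add: algebra_simps mult_exp_exp)
  also have "\<dots> \<le> C*(2*exp(smax*\<bar>q\<bar>*\<bar>t\<bar>))"
  proof -
    have "exp (-(q*X)) + exp (-(q*S*t)) \<le> 2*exp(smax*\<bar>q\<bar>*\<bar>t\<bar>)" using e1 e2 e3 by linarith
    then show ?thesis using C0 by (rule mult_left_mono)
  qed
  finally show ?thesis by simp
qed

lemma TT_lim_top:
  fixes f :: "real \<Rightarrow> real" and P :: "real \<Rightarrow> real \<Rightarrow> real"
  assumes fc: "continuous_on UNIV f" and fb: "\<And>z. \<bar>f z\<bar> \<le> C*(1+exp(q*z))" and q: "q \<le> 0"
    and f0: "(f \<longlongrightarrow> 0) at_top"
    and X: "filterlim X at_top sequentially" and S: "S \<longlonglongrightarrow> s" and Sb: "\<And>n. 0 \<le> S n \<and> S n \<le> smax"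
    and Pm: "\<And>n. P (S n) \<in> borel_measurable borel"
    and Pb: "\<And>n t. \<bar>P (S n) t\<bar> \<le> B * exp \<bar>t\<bar>"
    and Pl: "\<And>t. (\<lambda>n. P (S n) t) \<longlonglongrightarrow> Pl t"
  shows "(\<lambda>n. TT f (S n) (P (S n)) (X n)) \<longlonglongrightarrow> 0"
proof -
  have fm[measurable]: "f \<in> borel_measurable borel" by (rule borel_measurable_continuous_onI[OF fc])
  have B0: "B \<ge> 0" using Pb[of 0 0] abs_ge_zero[of "P (S 0) 0"] by simp
  have "(\<lambda>n. \<integral>t. f (X n - S n*t) * P (S n) t * std_normal_density t \<partial>lborel) \<longlonglongrightarrow> integral\<^sup>L lborel (\<lambda>t::real. 0)"
  proof (rule DCT_ev[where f="\<lambda>t. 0" and w="\<lambda>t. (2*C*B) * (std_normal_density t * exp ((smax*\<bar>q\<bar> + 1)*\<bar>t\<bar>))"])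
    show "integrable lborel (\<lambda>t. (2*C*B) * (std_normal_density t * exp ((smax*\<bar>q\<bar> + 1)*\<bar>t\<bar>)))"
      by (intro integrable_mult_right int_phi_expabs)
    show "(\<lambda>t. f (X n - S n*t) * P (S n) t * std_normal_density t) \<in> borel_measurable lborel" for n
      using Pm[of n] by measurable
    show "(\<lambda>n. f (X n - S n*t) * P (S n) t * std_normal_density t) \<longlonglongrightarrow> 0" for t
    proof -
      have "filterlim (\<lambda>n. - (S n * t) + X n) at_top sequentially"
        by (rule filterlim_tendsto_add_at_top[OF tendsto_minus[OF tendsto_mult[OF S tendsto_const]] X])
      then have "filterlim (\<lambda>n. X n - S n * t) at_top sequentially" by (simp add: algebra_simps)
      then have "(\<lambda>n. f (X n - S n*t)) \<longlonglongrightarrow> 0" by (rule filterlim_compose[OF f0])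
      then have "(\<lambda>n. f (X n - S n*t) * P (S n) t * std_normal_density t) \<longlonglongrightarrow> 0 * Pl t * std_normal_density t"
        by (intro tendsto_intros Pl)
      then show ?thesis by simp
    qed
    have "eventually (\<lambda>n. X n \<ge> 0) sequentially" using X by (simp add: filterlim_at_top)
    then show "eventually (\<lambda>n. \<forall>t. \<bar>f (X n - S n*t) * P (S n) t * std_normal_density t\<bar>
         \<le> (2*C*B) * (std_normal_density t * exp ((smax*\<bar>q\<bar> + 1)*\<bar>t\<bar>))) sequentially"
    proof eventually_elim
      case (elim n)
      show ?case
      proof
        fix t
        have C0: "C \<ge> 0" by (rule C_nonneg[OF fb])
        have "\<bar>f (X n - S n*t)\<bar> * \<bar>P (S n) t\<bar> \<le> (2*C*exp(smax*\<bar>q\<bar>*\<bar>t\<bar>)) * (B * exp \<bar>t\<bar>)"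
          by (intro mult_mono f_bound_top[OF fb q elim] Pb) (use Sb C0 in auto)
        also have "\<dots> = (2*C*B) * exp ((smax*\<bar>q\<bar> + 1)*\<bar>t\<bar>)"
          by (simp add: algebra_simps mult_exp_exp)
        finally have "\<bar>f (X n - S n*t)\<bar> * \<bar>P (S n) t\<bar> * std_normal_density t \<le> (2*C*B) * exp ((smax*\<bar>q\<bar> + 1)*\<bar>t\<bar>) * std_normal_density t"
          by (intro mult_right_mono) auto
        then show "\<bar>f (X n - S n*t) * P (S n) t * std_normal_density t\<bar>
         \<le> (2*C*B) * (std_normal_density t * exp ((smax*\<bar>q\<bar> + 1)*\<bar>t\<bar>))"
          by (simp add: abs_mult algebra_simps)
      qed
    qed
  qed simp
  then show ?thesis by (simp add: TT_def)
qed

lemma gauss_shift: "exp (-(q * s*t) - q^2 * s^2/2) * std_normal_density t = normal_density (-(q * s)) 1 t"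
  unfolding normal_density_def
  by (simp add: mult_exp_exp power2_eq_square field_simps)

lemma TT_lim_bot:
  fixes f :: "real \<Rightarrow> real" and P :: "real \<Rightarrow> real \<Rightarrow> real"
  assumes fc: "continuous_on UNIV f" and fb: "\<And>z. \<bar>f z\<bar> \<le> C*(1+exp(q*z))" and q: "q \<le> 0"
    and g1: "((\<lambda>z. f z * exp (-(q*z))) \<longlongrightarrow> 1) at_bot"
    and X: "filterlim X at_bot sequentially" and S: "S \<longlonglongrightarrow> s" and Sb: "\<And>n. 0 \<le> S n \<and> S n \<le> smax"
    and Pm: "\<And>n. P (S n) \<in> borel_measurable borel" and Plm: "Pl \<in> borel_measurable borel"
    and Pb: "\<And>n t. \<bar>P (S n) t\<bar> \<le> B * exp \<bar>t\<bar>"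
    and Pl: "\<And>t. (\<lambda>n. P (S n) t) \<longlonglongrightarrow> Pl t"
  shows "(\<lambda>n. TT f (S n) (P (S n)) (X n) * exp (-(q * X n) - q^2*(S n)^2/2))
     \<longlonglongrightarrow> (\<integral>t. normal_density (-(q * s)) 1 t * Pl t \<partial>lborel)"
proof -
  have fm[measurable]: "f \<in> borel_measurable borel" by (rule borel_measurable_continuous_onI[OF fc])
  note Plm[measurable]
  have B0: "B \<ge> 0" using Pb[of 0 0] abs_ge_zero[of "P (S 0) 0"] by simp
  have "(\<lambda>n. \<integral>t. f (X n - S n*t) * exp (-(q * X n) - q^2*(S n)^2/2) * P (S n) t * std_normal_density t \<partial>lborel)
     \<longlonglongrightarrow> (\<integral>t. normal_density (-(q * s)) 1 t * Pl t \<partial>lborel)"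
  proof (rule DCT_ev[where w="\<lambda>t. (2*C*B) * (std_normal_density t * exp ((smax*\<bar>q\<bar> + 1)*\<bar>t\<bar>))"])
    show "integrable lborel (\<lambda>t. (2*C*B) * (std_normal_density t * exp ((smax*\<bar>q\<bar> + 1)*\<bar>t\<bar>)))"
      by (intro integrable_mult_right int_phi_expabs)
    show "(\<lambda>t. f (X n - S n*t) * exp (-(q * X n) - q^2*(S n)^2/2) * P (S n) t * std_normal_density t) \<in> borel_measurable lborel" for n
      using Pm[of n] by measurable
    show "(\<lambda>t. normal_density (-(q * s)) 1 t * Pl t) \<in> borel_measurable lborel" by measurable
    show "(\<lambda>n. f (X n - S n*t) * exp (-(q * X n) - q^2*(S n)^2/2) * P (S n) t * std_normal_density t) \<longlonglongrightarrow> normal_density (-(q * s)) 1 t * Pl t" for t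
    proof -
      have "filterlim (\<lambda>n. - X n) at_top sequentially" using X by (simp add: filterlim_uminus_at_bot)
      then have "filterlim (\<lambda>n. S n * t + - X n) at_top sequentially"
        by (rule filterlim_tendsto_add_at_top[OF tendsto_mult[OF S tendsto_const]])
      then have "filterlim (\<lambda>n. X n - S n * t) at_bot sequentially" by (simp add: filterlim_uminus_at_bot algebra_simps)
      then have a: "(\<lambda>n. f (X n - S n*t) * exp (-(q*(X n - S n*t)))) \<longlonglongrightarrow> 1"
        by (rule filterlim_compose[OF g1])
      have b: "(\<lambda>n. exp (-(q*S n*t) - q^2*(S n)^2/2)) \<longlonglongrightarrow> exp (-(q * s*t) - q^2 * s^2/2)"
        by (intro tendsto_intros S) simp
      have eq: "f (X n - S n*t) * exp (-(q * X n) - q^2*(S n)^2/2) = (f (X n - S n*t) * exp (-(q*(X n - S n*t)))) * exp (-(q*S n*t) - q^2*(S n)^2/2)" for n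
        by (simp add: mult.assoc mult_exp_exp algebra_simps)
      have "(\<lambda>n. (f (X n - S n*t) * exp (-(q*(X n - S n*t)))) * exp (-(q*S n*t) - q^2*(S n)^2/2) * P (S n) t * std_normal_density t)
         \<longlonglongrightarrow> 1 * exp (-(q * s*t) - q^2 * s^2/2) * Pl t * std_normal_density t"
        by (intro tendsto_intros a b Pl)
      then show ?thesis unfolding eq
        using gauss_shift[of q s t] by (simp add: algebra_simps)
    qed
    have "eventually (\<lambda>n. X n \<le> 0) sequentially" using X by (simp add: filterlim_at_bot)
    then show "eventually (\<lambda>n. \<forall>t. \<bar>f (X n - S n*t) * exp (-(q * X n) - q^2*(S n)^2/2) * P (S n) t * std_normal_density t\<bar>
         \<le> (2*C*B) * (std_normal_density t * exp ((smax*\<bar>q\<bar> + 1)*\<bar>t\<bar>))) sequentially"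
    proof eventually_elim
      case (elim n)
      show ?case
      proof
        fix t
        have C0: "C \<ge> 0" by (rule C_nonneg[OF fb])
        have "\<bar>f (X n - S n*t) * exp (-(q * X n) - q^2*(S n)^2/2)\<bar> * \<bar>P (S n) t\<bar> \<le> (2*C*exp(smax*\<bar>q\<bar>*\<bar>t\<bar>)) * (B * exp \<bar>t\<bar>)"
          by (intro mult_mono f_bound_bot[OF fb q elim] Pb) (use Sb C0 in auto)
        also have "\<dots> = (2*C*B) * exp ((smax*\<bar>q\<bar> + 1)*\<bar>t\<bar>)"
          by (simp add: algebra_simps mult_exp_exp)
        finally have "\<bar>f (X n - S n*t) * exp (-(q * X n) - q^2*(S n)^2/2)\<bar> * \<bar>P (S n) t\<bar> * std_normal_density t \<le> (2*C*B) * exp ((smax*\<bar>q\<bar> + 1)*\<bar>t\<bar>) * std_normal_density t"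
          by (intro mult_right_mono) auto
        then show "\<bar>f (X n - S n*t) * exp (-(q * X n) - q^2*(S n)^2/2) * P (S n) t * std_normal_density t\<bar>
         \<le> (2*C*B) * (std_normal_density t * exp ((smax*\<bar>q\<bar> + 1)*\<bar>t\<bar>))"
          by (simp add: abs_mult algebra_simps)
      qed
    qed
  qed
  moreover have "TT f (S n) (P (S n)) (X n) * exp (-(q * X n) - q^2*(S n)^2/2) =
     (\<integral>t. f (X n - S n*t) * exp (-(q * X n) - q^2*(S n)^2/2) * P (S n) t * std_normal_density t \<partial>lborel)" for n
    unfolding TT_def by (simp add: algebra_simps flip: integral_mult_left_zero)
  ultimately show ?thesis by simp
qed

lemma gm_hb2: "has_bochner_integral lborel (\<lambda>t. normal_density \<mu> 1 t * t^2) (1 + \<mu>^2)"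
proof -
  have h1: "has_bochner_integral lborel (\<lambda>t. normal_density \<mu> 1 t * (t - \<mu>)^2) 1"
    using normal_moment_even[of 1 \<mu> 1] by (simp add: numeral_2_eq_2)
  have h2: "has_bochner_integral lborel (\<lambda>t. normal_density \<mu> 1 t * t) \<mu>"
    by (rule normal_moment_nz_1) simp
  have h3: "has_bochner_integral lborel (\<lambda>t. normal_density \<mu> 1 t) 1"
    using has_bochner_integral_integrable[OF integrable_normal_density[of 1 \<mu>]] by simp
  have "has_bochner_integral lborel (\<lambda>t. normal_density \<mu> 1 t * (t - \<mu>)^2 + 2*\<mu> * (normal_density \<mu> 1 t * t) - \<mu>^2 * normal_density \<mu> 1 t) (1 + 2*\<mu>*\<mu> - \<mu>^2 * 1)"
    by (intro has_bochner_integral_diff has_bochner_integral_add has_bochner_integral_mult_right h1 h2 h3)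
  then show ?thesis
  proof (rule has_bochner_integral_cong[THEN iffD1, rotated -1])
    show "normal_density \<mu> 1 t * (t - \<mu>)^2 + 2*\<mu> * (normal_density \<mu> 1 t * t) - \<mu>^2 * normal_density \<mu> 1 t
        = normal_density \<mu> 1 t * t^2" for t
      by (simp add: power2_eq_square ring_distribs)
  qed (simp_all add: power2_eq_square)
qed

lemma gm0: "(\<integral>t. normal_density \<mu> 1 t * 1 \<partial>lborel) = 1"
  using integral_normal_density[of 1 \<mu>] by simp

lemma gm1: "s \<noteq> 0 \<Longrightarrow> (\<integral>t. normal_density \<mu> 1 t * (- t / s) \<partial>lborel) = - \<mu> / s"
proof -
  have h1: "has_bochner_integral lborel (\<lambda>t. normal_density \<mu> 1 t * t) \<mu>"
    by (rule normal_moment_nz_1) simp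
  have "has_bochner_integral lborel (\<lambda>t. - (normal_density \<mu> 1 t * t) / s) (- \<mu> / s)"
    by (intro has_bochner_integral_divide_zero has_bochner_integral_minus h1)
  then have "has_bochner_integral lborel (\<lambda>t. normal_density \<mu> 1 t * (- t / s)) (- \<mu> / s)"
    by (rule has_bochner_integral_cong[THEN iffD1, rotated -1]) simp_all
  then show ?thesis by (rule has_bochner_integral_integral_eq)
qed

lemma gm2: "s \<noteq> 0 \<Longrightarrow> (\<integral>t. normal_density \<mu> 1 t * ((t^2 - 1) / s^2 + t / s) \<partial>lborel) = \<mu>^2 / s^2 + \<mu> / s"
proof -
  assume s: "s \<noteq> 0"
  have h2: "has_bochner_integral lborel (\<lambda>t. normal_density \<mu> 1 t * t^2) (1 + \<mu>^2)" by (rule gm_hb2)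
  have h1: "has_bochner_integral lborel (\<lambda>t. normal_density \<mu> 1 t * t) \<mu>"
    by (rule normal_moment_nz_1) simp
  have h0: "has_bochner_integral lborel (\<lambda>t. normal_density \<mu> 1 t) 1"
    using has_bochner_integral_integrable[OF integrable_normal_density[of 1 \<mu>]] by simp
  have "has_bochner_integral lborel (\<lambda>t. (normal_density \<mu> 1 t * t^2) / s^2 - normal_density \<mu> 1 t / s^2 + (normal_density \<mu> 1 t * t) / s)
      ((1 + \<mu>^2) / s^2 - 1 / s^2 + \<mu> / s)"
    by (intro has_bochner_integral_diff has_bochner_integral_add has_bochner_integral_divide_zero h0 h1 h2)
  then have "has_bochner_integral lborel (\<lambda>t. normal_density \<mu> 1 t * ((t^2 - 1) / s^2 + t / s))
      ((1 + \<mu>^2) / s^2 - 1 / s^2 + \<mu> / s)"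
  proof (rule has_bochner_integral_cong[THEN iffD1, rotated -1])
    show "normal_density \<mu> 1 t * t^2 / s^2 - normal_density \<mu> 1 t / s^2 + normal_density \<mu> 1 t * t / s
        = normal_density \<mu> 1 t * ((t^2 - 1) / s^2 + t / s)" for t
      by (simp add: ring_distribs diff_divide_distrib)
  qed simp_all
  then have "(\<integral>t. normal_density \<mu> 1 t * ((t^2 - 1) / s^2 + t / s) \<partial>lborel) = (1 + \<mu>^2) / s^2 - 1 / s^2 + \<mu> / s"
    by (rule has_bochner_integral_integral_eq)
  also have "(1 + \<mu>^2) / s^2 - 1 / s^2 + \<mu> / s = \<mu>^2 / s^2 + \<mu> / s"
    by (simp add: add_divide_distrib)
  finally show ?thesis .
qed

lemma abs_le_exp: "\<bar>t::real\<bar> \<le> exp \<bar>t\<bar>"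
  using exp_ge_add_one_self[of "\<bar>t\<bar>"] by linarith

lemma sq_le_exp: "(t::real)^2 \<le> 4 * exp \<bar>t\<bar>"
proof -
  have a: "\<bar>t\<bar>/2 \<le> exp (\<bar>t\<bar>/2)" using exp_ge_add_one_self[of "\<bar>t\<bar>/2"] by linarith
  have "t^2 = 4 * (\<bar>t\<bar>/2)^2" by (simp add: power2_eq_square)
  also have "\<dots> \<le> 4 * (exp (\<bar>t\<bar>/2))^2" using a by (intro mult_left_mono power_mono) auto
  also have "(exp (\<bar>t\<bar>/2))^2 = exp \<bar>t\<bar>" by (simp add: power2_eq_square mult_exp_exp)
  finally show ?thesis .
qed

lemma TT_cmult: "TT f s Q x * c = TT f s (\<lambda>t. Q t * c) x"
  unfolding TT_def integral_mult_left_zero[symmetric] by (simp only: mult_ac)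

lemma bnd1: "\<bar>1::real\<bar> \<le> 5 * exp \<bar>u\<bar>"
proof -
  have a: "1 \<le> exp \<bar>u\<bar>" by simp
  show ?thesis by (simp only: abs_one) (use a in linarith)
qed
lemma bndt: "\<bar>-u::real\<bar> \<le> 5 * exp \<bar>u\<bar>"
proof -
  have a: "1 \<le> exp \<bar>u\<bar>" by simp
  show ?thesis by (simp only: abs_minus_cancel) (use a abs_le_exp[of u] in linarith)
qed
lemma bndsq: "\<bar>u^2 - 1::real\<bar> \<le> 5 * exp \<bar>u\<bar>"
proof -
  have a: "1 \<le> exp \<bar>u\<bar>" by simp
  have b: "u^2 \<ge> 0" by simp
  show ?thesis unfolding abs_le_iff using a b sq_le_exp[of u] by linarith
qed

lemma V_derivs:
  fixes f :: "real \<Rightarrow> real"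
  assumes fc: "continuous_on UNIV f" and fb: "\<And>z. \<bar>f z\<bar> \<le> C*(1+exp(q*z))"
    and s: "s > 0" and y: "y > 0"
  shows "((\<lambda>y. TT f s (\<lambda>_. 1) (ln y - c)) has_real_derivative TT f s (\<lambda>t. -t) (ln y - c) / (s*y)) (at y)"
    and "((\<lambda>y. TT f s (\<lambda>t. -t) (ln y - c) / (s*y)) has_real_derivative
           (TT f s (\<lambda>t. t^2 - 1) (ln y - c)/s^2 - TT f s (\<lambda>t. -t) (ln y - c)/s) / y^2) (at y)"
proof -
  have e1: "1 \<le> exp \<bar>u\<bar>" for u :: real by simp
  have D0: "((\<lambda>x. TT f s (\<lambda>_. 1) x) has_real_derivative TT f s (\<lambda>t. -t) x / s) (at x)" for x
  proof (rule TT_deriv[OF fc fb s, where Q'="\<lambda>_. 0" and B=5])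
    show "\<bar>1::real\<bar> \<le> 5 * exp \<bar>u\<bar>" for u :: real by (rule bnd1)
    show "\<bar>-u\<bar> \<le> 5 * exp \<bar>u\<bar>" for u :: real by (rule bndt)
  qed (auto intro!: continuous_intros derivative_eq_intros)
  have D1: "((\<lambda>x. TT f s (\<lambda>t. -t) x) has_real_derivative TT f s (\<lambda>t. t^2 - 1) x / s) (at x)" for x
  proof (rule TT_deriv[OF fc fb s, where Q'="\<lambda>_. -1" and B=5])
    show "\<bar>-u\<bar> \<le> 5 * exp \<bar>u\<bar>" for u :: real by (rule bndt)
    show "\<bar>u^2 - 1\<bar> \<le> 5 * exp \<bar>u\<bar>" for u :: real by (rule bndsq)
    show "u^2 - 1 = -1 - u * - u" for u :: real by (simp add: power2_eq_square)
  qed (auto intro!: continuous_intros derivative_eq_intros)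
  have dln: "((\<lambda>y. ln y - c) has_real_derivative 1/y) (at y)"
    using y by (auto intro!: derivative_eq_intros)
  show "((\<lambda>y. TT f s (\<lambda>_. 1) (ln y - c)) has_real_derivative TT f s (\<lambda>t. -t) (ln y - c) / (s*y)) (at y)"
    using DERIV_chain2[OF D0 dln] by simp
  have dA: "((\<lambda>y. TT f s (\<lambda>t. -t) (ln y - c)) has_real_derivative TT f s (\<lambda>t. t^2 - 1) (ln y - c) / s * (1/y)) (at y)"
    by (rule DERIV_chain2[OF D1 dln])
  have dB: "((\<lambda>y. s*y) has_real_derivative s) (at y)" by (auto intro!: derivative_eq_intros)
  have "((\<lambda>y. TT f s (\<lambda>t. -t) (ln y - c) / (s*y)) has_real_derivative
      ((TT f s (\<lambda>t. t^2 - 1) (ln y - c) / s * (1/y)) * (s*y) - TT f s (\<lambda>t. -t) (ln y - c) * s) / ((s*y)*(s*y))) (at y)"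
    by (rule DERIV_divide[OF dA dB]) (use s y in simp)
  moreover have "((A / s * (1/y)) * (s*y) - Bv * s) / ((s*y)*(s*y)) = (A/s^2 - Bv/s) / y^2" for A Bv
    using s y by (simp add: field_simps power2_eq_square)
  ultimately show "((\<lambda>y. TT f s (\<lambda>t. -t) (ln y - c) / (s*y)) has_real_derivative
           (TT f s (\<lambda>t. t^2 - 1) (ln y - c)/s^2 - TT f s (\<lambda>t. -t) (ln y - c)/s) / y^2) (at y)"
    by simp
qed

lemma TT_comb:
  fixes f :: "real \<Rightarrow> real"
  assumes fc: "continuous_on UNIV f" and fb: "\<And>z. \<bar>f z\<bar> \<le> C*(1+exp(q*z))" and s: "s > 0"
  shows "TT f s (\<lambda>t. t^2 - 1) x / s^2 - TT f s (\<lambda>t. -t) x / s = TT f s (\<lambda>t. (t^2 - 1)/s^2 + t/s) x"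
proof -
  have e1: "1 \<le> exp \<bar>u\<bar>" for u :: real by simp
  have i1: "integrable lborel (\<lambda>t. f (x - s*t) * (t^2 - 1) * std_normal_density t)"
    by (rule int_T[OF fc fb, where B=5 and K=1]) (use s bndsq in auto)
  have i2: "integrable lborel (\<lambda>t. f (x - s*t) * (-t) * std_normal_density t)"
    by (rule int_T[OF fc fb, where B=5 and K=1]) (use s bndt in auto)
  have "TT f s (\<lambda>t. t^2 - 1) x / s^2 - TT f s (\<lambda>t. -t) x / s
     = (\<integral>t. f (x - s*t) * (t^2 - 1) * std_normal_density t / s^2 - f (x - s*t) * (-t) * std_normal_density t / s \<partial>lborel)"
    unfolding TT_def using i1 i2 by (simp add: integral_diff)
  also have "\<dots> = TT f s (\<lambda>t. (t^2 - 1)/s^2 + t/s) x"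
    unfolding TT_def by (rule Bochner_Integration.integral_cong) (auto simp: field_simps)
  finally show ?thesis .
qed

lemma U_props:
  fixes U :: "real \<Rightarrow> real"
  assumes q: "q < 0" and Uc: "continuous_on {0<..} U" and Ut: "(U \<longlongrightarrow> 0) at_top"
    and U0: "((\<lambda>y. U y / y powr q) \<longlongrightarrow> 1) (at_right 0)"
  shows "continuous_on UNIV (\<lambda>z. U (exp z))"
    and "((\<lambda>z. U (exp z)) \<longlongrightarrow> 0) at_top"
    and "((\<lambda>z. U (exp z) * exp (-(q*z))) \<longlongrightarrow> 1) at_bot"
    and "\<exists>C. \<forall>z. \<bar>U (exp z)\<bar> \<le> C * (1 + exp (q*z))"
proof -
  show fc: "continuous_on UNIV (\<lambda>z. U (exp z))"
    by (rule continuous_on_compose2[OF Uc]) (auto intro!: continuous_intros)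
  show ft: "((\<lambda>z. U (exp z)) \<longlongrightarrow> 0) at_top"
    by (rule filterlim_compose[OF Ut exp_at_top])
  have ex0: "filterlim (exp :: real \<Rightarrow> real) (at_right 0) at_bot"
    using exp_at_bot by (intro tendsto_imp_filterlim_at_right) auto
  have "((\<lambda>z. U (exp z) / (exp z powr q)) \<longlongrightarrow> 1) at_bot"
    by (rule filterlim_compose[OF U0 ex0])
  moreover have "(\<lambda>z. U (exp z) / (exp z powr q)) = (\<lambda>z. U (exp z) * exp (-(q*z)))"
  proof (rule ext)
    fix z :: real
    have "exp z powr q = exp (q*z)" by (simp add: powr_def mult.commute)
    then show "U (exp z) / (exp z powr q) = U (exp z) * exp (-(q*z))"
      by (simp add: exp_minus divide_inverse)
  qed
  ultimately show fb: "((\<lambda>z. U (exp z) * exp (-(q*z))) \<longlongrightarrow> 1) at_bot" by simp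
  define f where "f z = U (exp z)" for z
  have "eventually (\<lambda>z. dist (U (exp z) * exp (-(q*z))) 1 < 1) at_bot"
    using fb by (rule tendstoD) simp
  then obtain M1 where M1: "\<And>z. z \<le> M1 \<Longrightarrow> dist (U (exp z) * exp (-(q*z))) 1 < 1"
    by (auto simp: eventually_at_bot_linorder)
  have "eventually (\<lambda>z. dist (U (exp z)) 0 < 1) at_top"
    using ft by (rule tendstoD) simp
  then obtain M2 where M2: "\<And>z. z \<ge> M2 \<Longrightarrow> dist (U (exp z)) 0 < 1"
    by (auto simp: eventually_at_top_linorder)
  have "compact ((\<lambda>z. U (exp z)) ` {M1..M2})"
    by (rule compact_continuous_image[OF continuous_on_subset[OF fc]]) auto
  then have "bounded ((\<lambda>z. U (exp z)) ` {M1..M2})" by (rule compact_imp_bounded)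
  then obtain K where K0: "\<forall>x\<in>(\<lambda>z. U (exp z)) ` {M1..M2}. norm x \<le> K"
    unfolding bounded_iff by blast
  have K: "\<bar>U (exp z)\<bar> \<le> K" if "z \<in> {M1..M2}" for z
  proof -
    have "U (exp z) \<in> (\<lambda>z. U (exp z)) ` {M1..M2}" using that by (rule imageI)
    then show ?thesis using K0 by fastforce
  qed
  show "\<exists>C. \<forall>z. \<bar>U (exp z)\<bar> \<le> C * (1 + exp (q*z))"
  proof (intro exI allI)
    fix z
    have ep: "exp (q*z) > 0" by simp
    consider "z \<le> M1" | "z \<ge> M2" | "z \<in> {M1..M2}" by (cases "z \<le> M1"; cases "z \<ge> M2") auto
    then show "\<bar>U (exp z)\<bar> \<le> (2 + \<bar>K\<bar>) * (1 + exp (q*z))"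
    proof cases
      case 1
      then have "\<bar>U (exp z) * exp (-(q*z))\<bar> < 2" using M1[OF 1] by (simp add: dist_real_def)
      then have "\<bar>U (exp z)\<bar> * exp (-(q*z)) < 2" by (simp add: abs_mult)
      then have "\<bar>U (exp z)\<bar> * exp (-(q*z)) * exp (q*z) < 2 * exp (q*z)"
        using ep by (intro mult_strict_right_mono) auto
      then have "\<bar>U (exp z)\<bar> < 2 * exp (q*z)" by (simp add: mult.assoc mult_exp_exp)
      moreover have "2 * exp (q*z) \<le> (2 + \<bar>K\<bar>) * (1 + exp (q*z))" using ep by (simp add: algebra_simps)
      ultimately show ?thesis by linarith
    next
      case 2
      then have "\<bar>U (exp z)\<bar> < 1" using M2[OF 2] by (simp add: dist_real_def)
      moreover have "1 \<le> (2 + \<bar>K\<bar>) * (1 + exp (q*z))" using ep by (simp add: algebra_simps)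
      ultimately show ?thesis by linarith
    next
      case 3
      then have "\<bar>U (exp z)\<bar> \<le> K" by (rule K)
      moreover have "K \<le> (2 + \<bar>K\<bar>) * (1 + exp (q*z))"
      proof -
        have "(2 + \<bar>K\<bar>) * 1 \<le> (2 + \<bar>K\<bar>) * (1 + exp (q*z))" using ep by (intro mult_left_mono) auto
        then have a: "2 + \<bar>K\<bar> \<le> (2 + \<bar>K\<bar>) * (1 + exp (q*z))" by simp
        have b: "K \<le> \<bar>K\<bar>" by simp
        have "K \<le> \<bar>K\<bar>" by simp
        also have "\<dots> \<le> 2 + \<bar>K\<bar>" by simp
        also note a
        finally show ?thesis .
      qed
      ultimately show ?thesis by linarith
    qed
  qed
qed

lemma nd_scale: "\<sigma> > 0 \<Longrightarrow> \<sigma> * normal_density 0 \<sigma> (\<sigma>*t) = std_normal_density t"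
  unfolding normal_density_def
  by (simp add: real_sqrt_mult power_mult_distrib)

lemma rep:
  fixes U :: "real \<Rightarrow> real"
  assumes \<tau>: "\<tau> > 0" and y: "y > 0" and fc: "continuous_on UNIV (\<lambda>z. U (exp z))"
  shows "dual_v r \<theta> U \<tau> y = TT (\<lambda>z. U (exp z)) (\<theta> * sqrt \<tau>) (\<lambda>_. 1) (ln y - (r + \<theta>^2/2)*\<tau>)"
proof -
  define f where "f z = U (exp z)" for z
  have fm[measurable]: "f \<in> borel_measurable borel"
    unfolding f_def by (rule borel_measurable_continuous_onI[OF fc])
  define x where "x = ln y - (r + \<theta>^2/2)*\<tau>"
  have eqU: "U (y * exp (- (r + \<theta>\<^sup>2 / 2) * \<tau> - \<theta> * w)) = f (x - \<theta>*w)" for w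
  proof -
    have "exp (x - \<theta>*w) = exp (ln y + (- (r + \<theta>\<^sup>2 / 2) * \<tau> - \<theta> * w))"
      by (simp add: x_def algebra_simps)
    also have "\<dots> = y * exp (- (r + \<theta>\<^sup>2 / 2) * \<tau> - \<theta> * w)"
      using y by (simp only: exp_add exp_ln)
    finally have "y * exp (- (r + \<theta>\<^sup>2 / 2) * \<tau> - \<theta> * w) = exp (x - \<theta>*w)" ..
    then show ?thesis by (simp add: f_def)
  qed
  have st: "sqrt \<tau> > 0" using \<tau> by simp
  have "dual_v r \<theta> U \<tau> y = (\<integral>w. f (x - \<theta>*w) \<partial>bm_law \<tau>)"
    unfolding dual_v_def eqU ..
  also have "\<dots> = (\<integral>w. normal_density 0 (sqrt \<tau>) w *\<^sub>R f (x - \<theta>*w) \<partial>lborel)"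
    unfolding bm_law_def by (rule integral_density) auto
  also have "\<dots> = \<bar>sqrt \<tau>\<bar> *\<^sub>R (\<integral>t. normal_density 0 (sqrt \<tau>) (0 + sqrt \<tau> * t) *\<^sub>R f (x - \<theta>*(0 + sqrt \<tau> * t)) \<partial>lborel)"
    by (rule lborel_integral_real_affine) (use st in simp)
  also have "\<dots> = (\<integral>t. sqrt \<tau> * (normal_density 0 (sqrt \<tau>) (sqrt \<tau> * t) * f (x - \<theta>*(sqrt \<tau> * t))) \<partial>lborel)"
    using st by simp
  also have "\<dots> = (\<integral>t. f (x - (\<theta> * sqrt \<tau>)*t) * 1 * std_normal_density t \<partial>lborel)"
  proof (rule Bochner_Integration.integral_cong)
    fix t
    show "sqrt \<tau> * (normal_density 0 (sqrt \<tau>) (sqrt \<tau> * t) * f (x - \<theta>*(sqrt \<tau> * t))) = f (x - (\<theta> * sqrt \<tau>)*t) * 1 * std_normal_density t"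
      using nd_scale[OF st, of t] by (simp add: mult.assoc mult.left_commute mult.commute)
  qed simp
  finally show ?thesis by (simp add: TT_def f_def x_def)
qed

lemma TT_div: "TT f s Q x / c = TT f s (\<lambda>t. Q t / c) x"
  unfolding TT_def integral_divide_zero[symmetric] by simp

lemma seq_common:
  assumes \<theta>: "\<theta> > 0" and T: "\<And>n. T n \<in> {\<tau>0..\<tau>1}" and \<tau>0: "0 < \<tau>0" and Tl: "T \<longlonglongrightarrow> \<tau>" and \<tau>: "\<tau> \<in> {\<tau>0..\<tau>1}"
  shows "(\<lambda>n. \<theta> * sqrt (T n)) \<longlonglongrightarrow> \<theta> * sqrt \<tau>"
    and "\<And>n. 0 \<le> \<theta> * sqrt (T n) \<and> \<theta> * sqrt (T n) \<le> \<theta> * sqrt \<tau>1"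
    and "\<And>n. \<theta> * sqrt \<tau>0 \<le> \<theta> * sqrt (T n)"
    and "\<theta> * sqrt \<tau> > 0"
proof -
  show "(\<lambda>n. \<theta> * sqrt (T n)) \<longlonglongrightarrow> \<theta> * sqrt \<tau>" by (intro tendsto_intros Tl)
  show "0 \<le> \<theta> * sqrt (T n) \<and> \<theta> * sqrt (T n) \<le> \<theta> * sqrt \<tau>1" for n
    using T[of n] \<theta> \<tau>0 by (auto intro!: mult_left_mono)
  show "\<theta> * sqrt \<tau>0 \<le> \<theta> * sqrt (T n)" for n
    using T[of n] \<theta> by (auto intro!: mult_left_mono)
  show "\<theta> * sqrt \<tau> > 0" using \<tau> \<tau>0 \<theta> by auto
qed

lemma seq_top:
  fixes f :: "real \<Rightarrow> real" and P :: "real \<Rightarrow> real \<Rightarrow> real"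
  assumes fc: "continuous_on UNIV f" and fb: "\<And>z. \<bar>f z\<bar> \<le> C*(1+exp(q*z))" and q: "q \<le> 0"
    and f0: "(f \<longlongrightarrow> 0) at_top"
    and \<theta>: "\<theta> > 0" and T: "\<And>n. T n \<in> {\<tau>0..\<tau>1}" and \<tau>0: "0 < \<tau>0" and Tl: "T \<longlonglongrightarrow> \<tau>" and \<tau>: "\<tau> \<in> {\<tau>0..\<tau>1}"
    and Y: "filterlim Y at_top sequentially"
    and Pm: "\<And>s. P s \<in> borel_measurable borel"
    and Pb: "\<And>s t. s \<ge> \<theta> * sqrt \<tau>0 \<Longrightarrow> \<bar>P s t\<bar> \<le> B * exp \<bar>t\<bar>"
    and Pc: "\<And>t. isCont (\<lambda>s. P s t) (\<theta> * sqrt \<tau>)"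
  shows "(\<lambda>n. TT f (\<theta> * sqrt (T n)) (P (\<theta> * sqrt (T n))) (ln (Y n) - a * T n)) \<longlonglongrightarrow> 0"
proof (rule TT_lim_top[OF fc fb q f0, where Pl="\<lambda>t. P (\<theta> * sqrt \<tau>) t" and B=B and smax="\<theta> * sqrt \<tau>1"])
  note sc = seq_common[OF \<theta> T \<tau>0 Tl \<tau>]
  show "(\<lambda>n. \<theta> * sqrt (T n)) \<longlonglongrightarrow> \<theta> * sqrt \<tau>" by (rule sc(1))
  show "0 \<le> \<theta> * sqrt (T n) \<and> \<theta> * sqrt (T n) \<le> \<theta> * sqrt \<tau>1" for n by (rule sc(2))
  show "P (\<theta> * sqrt (T n)) \<in> borel_measurable borel" for n by (rule Pm)
  show "\<bar>P (\<theta> * sqrt (T n)) t\<bar> \<le> B * exp \<bar>t\<bar>" for n t by (rule Pb[OF sc(3)])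
  show "(\<lambda>n. P (\<theta> * sqrt (T n)) t) \<longlonglongrightarrow> P (\<theta> * sqrt \<tau>) t" for t
    by (rule isCont_tendsto_compose[OF Pc sc(1)])
  have "filterlim (\<lambda>n. ln (Y n)) at_top sequentially" by (rule filterlim_compose[OF ln_at_top Y])
  then have "filterlim (\<lambda>n. - (a * T n) + ln (Y n)) at_top sequentially"
    by (rule filterlim_tendsto_add_at_top[OF tendsto_minus[OF tendsto_mult[OF tendsto_const Tl]]])
  then show "filterlim (\<lambda>n. ln (Y n) - a * T n) at_top sequentially" by (simp add: algebra_simps)
qed

lemma seq_bot:
  fixes f :: "real \<Rightarrow> real" and P :: "real \<Rightarrow> real \<Rightarrow> real"
  assumes fc: "continuous_on UNIV f" and fb: "\<And>z. \<bar>f z\<bar> \<le> C*(1+exp(q*z))" and q: "q \<le> 0"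
    and g1: "((\<lambda>z. f z * exp (-(q*z))) \<longlongrightarrow> 1) at_bot"
    and \<theta>: "\<theta> > 0" and T: "\<And>n. T n \<in> {\<tau>0..\<tau>1}" and \<tau>0: "0 < \<tau>0" and Tl: "T \<longlonglongrightarrow> \<tau>" and \<tau>: "\<tau> \<in> {\<tau>0..\<tau>1}"
    and Y: "filterlim Y (at_right 0) sequentially"
    and Pm: "\<And>s. P s \<in> borel_measurable borel"
    and Pb: "\<And>s t. s \<ge> \<theta> * sqrt \<tau>0 \<Longrightarrow> \<bar>P s t\<bar> \<le> B * exp \<bar>t\<bar>"
    and Pc: "\<And>t. isCont (\<lambda>s. P s t) (\<theta> * sqrt \<tau>)"
  shows "(\<lambda>n. TT f (\<theta> * sqrt (T n)) (P (\<theta> * sqrt (T n))) (ln (Y n) - a * T n)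
            * exp (-(q * (ln (Y n) - a * T n)) - q^2*(\<theta> * sqrt (T n))^2/2))
      \<longlonglongrightarrow> (\<integral>t. normal_density (-(q*(\<theta> * sqrt \<tau>))) 1 t * P (\<theta> * sqrt \<tau>) t \<partial>lborel)"
proof (rule TT_lim_bot[OF fc fb q g1, where Pl="\<lambda>t. P (\<theta> * sqrt \<tau>) t" and B=B and smax="\<theta> * sqrt \<tau>1"])
  note sc = seq_common[OF \<theta> T \<tau>0 Tl \<tau>]
  show "(\<lambda>n. \<theta> * sqrt (T n)) \<longlonglongrightarrow> \<theta> * sqrt \<tau>" by (rule sc(1))
  show "0 \<le> \<theta> * sqrt (T n) \<and> \<theta> * sqrt (T n) \<le> \<theta> * sqrt \<tau>1" for n by (rule sc(2))
  show "P (\<theta> * sqrt (T n)) \<in> borel_measurable borel" for n by (rule Pm)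
  show "(\<lambda>t. P (\<theta> * sqrt \<tau>) t) \<in> borel_measurable borel" using Pm by simp
  show "\<bar>P (\<theta> * sqrt (T n)) t\<bar> \<le> B * exp \<bar>t\<bar>" for n t by (rule Pb[OF sc(3)])
  show "(\<lambda>n. P (\<theta> * sqrt (T n)) t) \<longlonglongrightarrow> P (\<theta> * sqrt \<tau>) t" for t
    by (rule isCont_tendsto_compose[OF Pc sc(1)])
  have "filterlim (\<lambda>n. ln (Y n)) at_bot sequentially" by (rule filterlim_compose[OF ln_at_0 Y])
  then have "filterlim (\<lambda>n. - ln (Y n)) at_top sequentially" by (simp add: filterlim_uminus_at_bot)
  then have "filterlim (\<lambda>n. a * T n + - ln (Y n)) at_top sequentially"
    by (rule filterlim_tendsto_add_at_top[OF tendsto_mult[OF tendsto_const Tl]])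
  then show "filterlim (\<lambda>n. ln (Y n) - a * T n) at_bot sequentially"
    by (simp add: filterlim_uminus_at_bot algebra_simps)
qed

lemma expo_id:
  assumes \<tau>: "\<tau> > 0" and y: "y > 0"
  shows "exp (dual_lambda r \<theta> q * \<tau>) * y powr q = exp (q * (ln y - (r + \<theta>\<^sup>2/2)*\<tau>) + q^2*(\<theta> * sqrt \<tau>)^2/2)"
proof -
  have p: "y powr q = exp (q * ln y)" using y by (simp add: powr_def mult.commute)
  have s2: "(\<theta> * sqrt \<tau>)^2 = \<theta>^2 * \<tau>" using \<tau> by (simp add: power_mult_distrib)
  have e: "dual_lambda r \<theta> q * \<tau> + q * ln y = q * (ln y - (r + \<theta>\<^sup>2/2)*\<tau>) + q^2*(\<theta>^2 * \<tau>)/2"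
    by (simp add: dual_lambda_def field_simps power2_eq_square)
  show ?thesis unfolding p s2 mult_exp_exp e ..
qed

lemma div_exp: "(A::real) / exp Z = A * exp (- Z)"
  by (simp add: exp_minus divide_inverse)

theorem corollary4p2:
  fixes r \<theta> q :: real and U :: "real \<Rightarrow> real"
  assumes "r > 0" and "\<theta> > 0" and "q < 0"
    and "continuous_on {0<..} U"
    and "(U \<longlongrightarrow> 0) at_top"
    and "((\<lambda>y. U y / y powr q) \<longlongrightarrow> 1) (at_right 0)"
  defines "v \<equiv> dual_v r \<theta> U"
    and "lam \<equiv> dual_lambda r \<theta> q"
  shows "(\<forall>\<tau>>0. \<forall>y>0. (\<lambda>y. v \<tau> y) differentiable (at y)
                      \<and> deriv (\<lambda>y. v \<tau> y) differentiable (at y))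
    \<and> (\<forall>\<tau>0 \<tau>1. 0 < \<tau>0 \<and> \<tau>0 < \<tau>1 \<longrightarrow>
        uniform_limit {\<tau>0..\<tau>1} (\<lambda>y \<tau>. v \<tau> y) (\<lambda>\<tau>. 0) at_top
      \<and> uniform_limit {\<tau>0..\<tau>1} (\<lambda>y \<tau>. y * deriv (\<lambda>y. v \<tau> y) y) (\<lambda>\<tau>. 0) at_top
      \<and> uniform_limit {\<tau>0..\<tau>1} (\<lambda>y \<tau>. y\<^sup>2 * deriv (deriv (\<lambda>y. v \<tau> y)) y) (\<lambda>\<tau>. 0) at_top
      \<and> uniform_limit {\<tau>0..\<tau>1} (\<lambda>y \<tau>. v \<tau> y / (exp (lam * \<tau>) * y powr q))
          (\<lambda>\<tau>. 1) (at_right 0)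
      \<and> uniform_limit {\<tau>0..\<tau>1} (\<lambda>y \<tau>. deriv (\<lambda>y. v \<tau> y) y / (exp (lam * \<tau>) * y powr (q - 1)))
          (\<lambda>\<tau>. q) (at_right 0)
      \<and> uniform_limit {\<tau>0..\<tau>1} (\<lambda>y \<tau>. deriv (deriv (\<lambda>y. v \<tau> y)) y / (exp (lam * \<tau>) * y powr (q - 2)))
          (\<lambda>\<tau>. q * (q - 1)) (at_right 0))"
proof -
  have q0: "q \<le> 0" using assms(3) by simp
  have \<theta>: "\<theta> > 0" by (rule assms(2))
  note UP = U_props[OF assms(3) assms(4) assms(5) assms(6)]
  define f where "f = (\<lambda>z. U (exp z))"
  have fc: "continuous_on UNIV f" using UP(1) by (simp add: f_def)
  have f0: "(f \<longlongrightarrow> 0) at_top" using UP(2) by (simp add: f_def)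
  have g1: "((\<lambda>z. f z * exp (-(q*z))) \<longlongrightarrow> 1) at_bot" using UP(3) by (simp add: f_def)
  obtain C where fb: "\<And>z. \<bar>f z\<bar> \<le> C*(1+exp(q*z))" using UP(4) by (auto simp: f_def)
  define a where "a = r + \<theta>\<^sup>2/2"
  define R0 where "R0 = (\<lambda>t::real. -t)"
  define R1 where "R1 = (\<lambda>t::real. t^2 - 1)"
  define V1 where "V1 \<tau> y = TT f (\<theta> * sqrt \<tau>) R0 (ln y - a*\<tau>) / (\<theta> * sqrt \<tau> * y)" for \<tau> y
  define V2 where "V2 \<tau> y = (TT f (\<theta> * sqrt \<tau>) R1 (ln y - a*\<tau>)/(\<theta> * sqrt \<tau>)^2 - TT f (\<theta> * sqrt \<tau>) R0 (ln y - a*\<tau>)/(\<theta> * sqrt \<tau>)) / y^2" for \<tau> y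
  have rep: "v \<tau> y = TT f (\<theta> * sqrt \<tau>) (\<lambda>_. 1) (ln y - a*\<tau>)" if "\<tau> > 0" "y > 0" for \<tau> y
    using rep[OF that UP(1), of r \<theta>] by (simp add: v_def f_def a_def)
  have D1: "((\<lambda>y. v \<tau> y) has_real_derivative V1 \<tau> y) (at y)" if "\<tau> > 0" "y > 0" for \<tau> y
  proof -
    have s: "\<theta> * sqrt \<tau> > 0" using that \<theta> by simp
    have "((\<lambda>y. TT f (\<theta> * sqrt \<tau>) (\<lambda>_. 1) (ln y - a*\<tau>)) has_real_derivative V1 \<tau> y) (at y)"
      unfolding V1_def R0_def by (rule V_derivs(1)[OF fc fb s that(2)])
    then show ?thesis
      by (rule has_field_derivative_transform_within_open[where S="{0<..}"]) (use that rep in auto)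
  qed
  have dv: "deriv (\<lambda>y. v \<tau> y) y = V1 \<tau> y" if "\<tau> > 0" "y > 0" for \<tau> y
    using D1[OF that] by (rule DERIV_imp_deriv)
  have D2: "(deriv (\<lambda>y. v \<tau> y) has_real_derivative V2 \<tau> y) (at y)" if "\<tau> > 0" "y > 0" for \<tau> y
  proof -
    have s: "\<theta> * sqrt \<tau> > 0" using that \<theta> by simp
    have "((\<lambda>y. V1 \<tau> y) has_real_derivative V2 \<tau> y) (at y)"
      unfolding V1_def V2_def R0_def R1_def by (rule V_derivs(2)[OF fc fb s that(2)])
    then show ?thesis
      by (rule has_field_derivative_transform_within_open[where S="{0<..}"]) (use that dv in auto)
  qed
  have dv2: "deriv (deriv (\<lambda>y. v \<tau> y)) y = V2 \<tau> y" if "\<tau> > 0" "y > 0" for \<tau> y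
    using D2[OF that] by (rule DERIV_imp_deriv)
  have part1: "\<forall>\<tau>>0. \<forall>y>0. (\<lambda>y. v \<tau> y) differentiable (at y) \<and> deriv (\<lambda>y. v \<tau> y) differentiable (at y)"
    unfolding real_differentiable_def using D1 D2 by blast
  have E1: "y * V1 \<tau> y = TT f (\<theta> * sqrt \<tau>) (\<lambda>t. - t / (\<theta> * sqrt \<tau>)) (ln y - a*\<tau>)" if "\<tau> > 0" "y > 0" for \<tau> y
  proof -
    have "y * V1 \<tau> y = TT f (\<theta> * sqrt \<tau>) R0 (ln y - a*\<tau>) / (\<theta> * sqrt \<tau>)"
      using that by (simp add: V1_def)
    then show ?thesis by (simp add: TT_div R0_def)
  qed
  have E2: "y^2 * V2 \<tau> y = TT f (\<theta> * sqrt \<tau>) (\<lambda>t. (t^2 - 1) / (\<theta> * sqrt \<tau>)^2 + t / (\<theta> * sqrt \<tau>)) (ln y - a*\<tau>)"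
    if "\<tau> > 0" "y > 0" for \<tau> y
  proof -
    have s: "\<theta> * sqrt \<tau> > 0" using that \<theta> by simp
    have "y^2 * V2 \<tau> y = TT f (\<theta> * sqrt \<tau>) R1 (ln y - a*\<tau>)/(\<theta> * sqrt \<tau>)^2 - TT f (\<theta> * sqrt \<tau>) R0 (ln y - a*\<tau>)/(\<theta> * sqrt \<tau>)"
      using that by (simp add: V2_def)
    also have "\<dots> = TT f (\<theta> * sqrt \<tau>) (\<lambda>t. (t^2 - 1) / (\<theta> * sqrt \<tau>)^2 + t / (\<theta> * sqrt \<tau>)) (ln y - a*\<tau>)"
      unfolding R0_def R1_def by (rule TT_comb[OF fc fb s])
    finally show ?thesis .
  qed
  have part2: "uniform_limit {\<tau>0..\<tau>1} (\<lambda>y \<tau>. v \<tau> y) (\<lambda>\<tau>. 0) at_top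
      \<and> uniform_limit {\<tau>0..\<tau>1} (\<lambda>y \<tau>. y * deriv (\<lambda>y. v \<tau> y) y) (\<lambda>\<tau>. 0) at_top
      \<and> uniform_limit {\<tau>0..\<tau>1} (\<lambda>y \<tau>. y\<^sup>2 * deriv (deriv (\<lambda>y. v \<tau> y)) y) (\<lambda>\<tau>. 0) at_top
      \<and> uniform_limit {\<tau>0..\<tau>1} (\<lambda>y \<tau>. v \<tau> y / (exp (lam * \<tau>) * y powr q))
          (\<lambda>\<tau>. 1) (at_right 0)
      \<and> uniform_limit {\<tau>0..\<tau>1} (\<lambda>y \<tau>. deriv (\<lambda>y. v \<tau> y) y / (exp (lam * \<tau>) * y powr (q - 1)))
          (\<lambda>\<tau>. q) (at_right 0)
      \<and> uniform_limit {\<tau>0..\<tau>1} (\<lambda>y \<tau>. deriv (deriv (\<lambda>y. v \<tau> y)) y / (exp (lam * \<tau>) * y powr (q - 2)))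
          (\<lambda>\<tau>. q * (q - 1)) (at_right 0)"
    if \<tau>01: "0 < \<tau>0" "\<tau>0 < \<tau>1" for \<tau>0 \<tau>1
  proof -
    define s0 where "s0 = \<theta> * sqrt \<tau>0"
    have s0: "s0 > 0" using \<tau>01 \<theta> by (simp add: s0_def)
    have Kpos: "\<tau> > 0" if "\<tau> \<in> {\<tau>0..\<tau>1}" for \<tau> using that \<tau>01 by auto
    have Pb0: "\<bar>(\<lambda>s t. 1::real) s t\<bar> \<le> 1 * exp \<bar>t\<bar>" for s t :: real by simp
    have Pb1: "\<bar>(\<lambda>s t. - t / s) s t\<bar> \<le> (1/s0) * exp \<bar>t\<bar>" if "s \<ge> \<theta> * sqrt \<tau>0" for s t :: real
    proof -
      have sp: "s \<ge> s0" using that by (simp add: s0_def)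
      have "\<bar>- t / s\<bar> = \<bar>t\<bar> / s" using sp s0 by (simp add: abs_divide)
      also have "\<dots> \<le> \<bar>t\<bar> / s0" using sp s0 by (intro divide_left_mono) auto
      also have "\<dots> \<le> exp \<bar>t\<bar> / s0" using s0 abs_le_exp[of t] by (intro divide_right_mono) auto
      finally show ?thesis by simp
    qed
    have Pb2: "\<bar>(\<lambda>s t. (t^2 - 1) / s^2 + t / s) s t\<bar> \<le> (5/s0^2 + 5/s0) * exp \<bar>t\<bar>" if "s \<ge> \<theta> * sqrt \<tau>0" for s t :: real
    proof -
      have sp: "s \<ge> s0" using that by (simp add: s0_def)
      have a1: "\<bar>(t^2 - 1) / s^2\<bar> \<le> 5 * exp \<bar>t\<bar> / s0^2"
      proof -
        have "\<bar>(t^2 - 1) / s^2\<bar> = \<bar>t^2 - 1\<bar> / s^2" by (simp add: abs_divide)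
        also have "\<dots> \<le> \<bar>t^2 - 1\<bar> / s0^2" using sp s0 by (intro divide_left_mono power_mono mult_pos_pos) auto
        also have "\<dots> \<le> 5 * exp \<bar>t\<bar> / s0^2" using s0 bndsq[of t] by (intro divide_right_mono) auto
        finally show ?thesis .
      qed
      have a2: "\<bar>t / s\<bar> \<le> 5 * exp \<bar>t\<bar> / s0"
      proof -
        have "\<bar>t / s\<bar> = \<bar>-t\<bar> / s" using sp s0 by (simp add: abs_divide)
        also have "\<dots> \<le> \<bar>-t\<bar> / s0" using sp s0 by (intro divide_left_mono) auto
        also have "\<dots> \<le> 5 * exp \<bar>t\<bar> / s0" using s0 bndt[of t] by (intro divide_right_mono) auto
        finally show ?thesis .
      qed
      have "\<bar>(t^2 - 1) / s^2 + t / s\<bar> \<le> 5 * exp \<bar>t\<bar> / s0^2 + 5 * exp \<bar>t\<bar> / s0"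
        using a1 a2 abs_triangle_ineq[of "(t^2 - 1) / s^2" "t / s"] by linarith
      then show ?thesis by (simp add: algebra_simps)
    qed
    have m0: "(\<lambda>s t. 1::real) s \<in> borel_measurable borel" for s :: real by simp
    have m1: "(\<lambda>s t. - t / s) s \<in> borel_measurable borel" for s :: real by simp
    have m2: "(\<lambda>s t. (t^2 - 1) / s^2 + t / s) s \<in> borel_measurable borel" for s :: real by simp
    have c0: "isCont (\<lambda>s. (\<lambda>s t. 1::real) s t) x" for x t :: real by simp
    have c1: "isCont (\<lambda>s. (\<lambda>s t. - t / s) s t) x" if "x > 0" for x t :: real
      using that by (auto intro!: continuous_intros)
    have c2: "isCont (\<lambda>s. (\<lambda>s t. (t^2 - 1) / s^2 + t / s) s t) x" if "x > 0" for x t :: real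
      using that by (auto intro!: continuous_intros)

    have La: "uniform_limit {\<tau>0..\<tau>1} (\<lambda>y \<tau>. v \<tau> y) (\<lambda>\<tau>. 0) at_top"
    proof (rule unif_top[OF compact_Icc continuous_on_const])
      fix Y T :: "nat \<Rightarrow> real" and \<tau> :: real assume T: "\<And>n. T n \<in> {\<tau>0..\<tau>1}" and Tl: "T \<longlonglongrightarrow> \<tau>" and \<tau>: "\<tau> \<in> {\<tau>0..\<tau>1}"
        and Y: "filterlim Y at_top sequentially" and Yp: "\<And>n. Y n > 0"
      have eq: "v (T n) (Y n) = TT f (\<theta> * sqrt (T n)) ((\<lambda>s t. 1) (\<theta> * sqrt (T n))) (ln (Y n) - a * T n)" for n
        using rep[OF Kpos[OF T[of n]] Yp[of n]] by simp
      show "(\<lambda>n. v (T n) (Y n)) \<longlonglongrightarrow> 0"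
        unfolding eq by (rule seq_top[OF fc fb q0 f0 \<theta> T \<tau>01(1) Tl \<tau> Y, where P="\<lambda>s t. 1" and B=1]) (use Pb0 m0 c0 in auto)
    qed
    have Lb: "uniform_limit {\<tau>0..\<tau>1} (\<lambda>y \<tau>. y * deriv (\<lambda>y. v \<tau> y) y) (\<lambda>\<tau>. 0) at_top"
    proof (rule unif_top[OF compact_Icc continuous_on_const])
      fix Y T :: "nat \<Rightarrow> real" and \<tau> :: real assume T: "\<And>n. T n \<in> {\<tau>0..\<tau>1}" and Tl: "T \<longlonglongrightarrow> \<tau>" and \<tau>: "\<tau> \<in> {\<tau>0..\<tau>1}"
        and Y: "filterlim Y at_top sequentially" and Yp: "\<And>n. Y n > 0"
      have eq: "Y n * deriv (\<lambda>y. v (T n) y) (Y n) = TT f (\<theta> * sqrt (T n)) ((\<lambda>s t. - t / s) (\<theta> * sqrt (T n))) (ln (Y n) - a * T n)" for n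
        using dv[OF Kpos[OF T[of n]] Yp[of n]] E1[OF Kpos[OF T[of n]] Yp[of n]] by simp
      have sp: "\<theta> * sqrt \<tau> > 0" by (rule seq_common(4)[OF \<theta> T \<tau>01(1) Tl \<tau>])
      show "(\<lambda>n. Y n * deriv (\<lambda>y. v (T n) y) (Y n)) \<longlonglongrightarrow> 0"
        unfolding eq by (rule seq_top[OF fc fb q0 f0 \<theta> T \<tau>01(1) Tl \<tau> Y, where P="\<lambda>s t. - t / s" and B="1/s0"])
          (use Pb1 m1 c1[OF sp] in auto)
    qed
    have Lc: "uniform_limit {\<tau>0..\<tau>1} (\<lambda>y \<tau>. y\<^sup>2 * deriv (deriv (\<lambda>y. v \<tau> y)) y) (\<lambda>\<tau>. 0) at_top"
    proof (rule unif_top[OF compact_Icc continuous_on_const])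
      fix Y T :: "nat \<Rightarrow> real" and \<tau> :: real assume T: "\<And>n. T n \<in> {\<tau>0..\<tau>1}" and Tl: "T \<longlonglongrightarrow> \<tau>" and \<tau>: "\<tau> \<in> {\<tau>0..\<tau>1}"
        and Y: "filterlim Y at_top sequentially" and Yp: "\<And>n. Y n > 0"
      have eq: "(Y n)\<^sup>2 * deriv (deriv (\<lambda>y. v (T n) y)) (Y n) = TT f (\<theta> * sqrt (T n)) ((\<lambda>s t. (t^2 - 1) / s^2 + t / s) (\<theta> * sqrt (T n))) (ln (Y n) - a * T n)" for n
        using dv2[OF Kpos[OF T[of n]] Yp[of n]] E2[OF Kpos[OF T[of n]] Yp[of n]] by simp
      have sp: "\<theta> * sqrt \<tau> > 0" by (rule seq_common(4)[OF \<theta> T \<tau>01(1) Tl \<tau>])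
      show "(\<lambda>n. (Y n)\<^sup>2 * deriv (deriv (\<lambda>y. v (T n) y)) (Y n)) \<longlonglongrightarrow> 0"
        unfolding eq by (rule seq_top[OF fc fb q0 f0 \<theta> T \<tau>01(1) Tl \<tau> Y, where P="\<lambda>s t. (t^2 - 1) / s^2 + t / s" and B="5/s0^2 + 5/s0"])
          (use Pb2 m2 c2[OF sp] in auto)
    qed
    have Ld: "uniform_limit {\<tau>0..\<tau>1} (\<lambda>y \<tau>. v \<tau> y / (exp (lam * \<tau>) * y powr q)) (\<lambda>\<tau>. 1) (at_right 0)"
    proof (rule unif_right0[OF compact_Icc continuous_on_const])
      fix Y T :: "nat \<Rightarrow> real" and \<tau> :: real assume T: "\<And>n. T n \<in> {\<tau>0..\<tau>1}" and Tl: "T \<longlonglongrightarrow> \<tau>" and \<tau>: "\<tau> \<in> {\<tau>0..\<tau>1}"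
        and Y: "filterlim Y (at_right 0) sequentially" and Yp: "\<And>n. Y n > 0"
      have eq: "v (T n) (Y n) / (exp (lam * T n) * Y n powr q) = TT f (\<theta> * sqrt (T n)) ((\<lambda>s t. 1) (\<theta> * sqrt (T n))) (ln (Y n) - a * T n)
            * exp (-(q * (ln (Y n) - a * T n)) - q^2*(\<theta> * sqrt (T n))^2/2)" for n
        unfolding rep[OF Kpos[OF T[of n]] Yp[of n]] lam_def expo_id[OF Kpos[OF T[of n]] Yp[of n]] div_exp a_def
        by simp
      have sp: "\<theta> * sqrt \<tau> > 0" by (rule seq_common(4)[OF \<theta> T \<tau>01(1) Tl \<tau>])
      have L: "(\<lambda>n. TT f (\<theta> * sqrt (T n)) ((\<lambda>s t. 1) (\<theta> * sqrt (T n))) (ln (Y n) - a * T n)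
            * exp (-(q * (ln (Y n) - a * T n)) - q^2*(\<theta> * sqrt (T n))^2/2))
         \<longlonglongrightarrow> (\<integral>t. normal_density (-(q*(\<theta> * sqrt \<tau>))) 1 t * (\<lambda>s t. 1) (\<theta> * sqrt \<tau>) t \<partial>lborel)"
        by (rule seq_bot[OF fc fb q0 g1 \<theta> T \<tau>01(1) Tl \<tau> Y, where P="\<lambda>s t. 1" and B=1]) (use Pb0 m0 c0 in auto)
      show "(\<lambda>n. v (T n) (Y n) / (exp (lam * T n) * Y n powr q)) \<longlonglongrightarrow> 1"
        unfolding eq using L by (simp add: gm0)
    qed

    have Le: "uniform_limit {\<tau>0..\<tau>1} (\<lambda>y \<tau>. deriv (\<lambda>y. v \<tau> y) y / (exp (lam * \<tau>) * y powr (q - 1))) (\<lambda>\<tau>. q) (at_right 0)"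
    proof (rule unif_right0[OF compact_Icc continuous_on_const])
      fix Y T :: "nat \<Rightarrow> real" and \<tau> :: real assume T: "\<And>n. T n \<in> {\<tau>0..\<tau>1}" and Tl: "T \<longlonglongrightarrow> \<tau>" and \<tau>: "\<tau> \<in> {\<tau>0..\<tau>1}"
        and Y: "filterlim Y (at_right 0) sequentially" and Yp: "\<And>n. Y n > 0"
      have eq: "deriv (\<lambda>y. v (T n) y) (Y n) / (exp (lam * T n) * Y n powr (q - 1)) = TT f (\<theta> * sqrt (T n)) ((\<lambda>s t. - t / s) (\<theta> * sqrt (T n))) (ln (Y n) - a * T n)
            * exp (-(q * (ln (Y n) - a * T n)) - q^2*(\<theta> * sqrt (T n))^2/2)" for n
      proof -
        have p: "Y n powr (q - 1) = Y n powr q / Y n" using Yp[of n] by (simp add: powr_diff)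
        have "deriv (\<lambda>y. v (T n) y) (Y n) / (exp (lam * T n) * Y n powr (q - 1))
            = (Y n * V1 (T n) (Y n)) / (exp (lam * T n) * Y n powr q)"
          using Yp[of n] by (simp add: dv[OF Kpos[OF T[of n]] Yp[of n]] p field_simps)
        also have "\<dots> = TT f (\<theta> * sqrt (T n)) ((\<lambda>s t. - t / s) (\<theta> * sqrt (T n))) (ln (Y n) - a * T n)
            * exp (-(q * (ln (Y n) - a * T n)) - q^2*(\<theta> * sqrt (T n))^2/2)"
          unfolding E1[OF Kpos[OF T[of n]] Yp[of n]] lam_def expo_id[OF Kpos[OF T[of n]] Yp[of n]] div_exp a_def
          by simp
        finally show ?thesis .
      qed
      have sp: "\<theta> * sqrt \<tau> > 0" by (rule seq_common(4)[OF \<theta> T \<tau>01(1) Tl \<tau>])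
      have L: "(\<lambda>n. TT f (\<theta> * sqrt (T n)) ((\<lambda>s t. - t / s) (\<theta> * sqrt (T n))) (ln (Y n) - a * T n)
            * exp (-(q * (ln (Y n) - a * T n)) - q^2*(\<theta> * sqrt (T n))^2/2))
         \<longlonglongrightarrow> (\<integral>t. normal_density (-(q*(\<theta> * sqrt \<tau>))) 1 t * (\<lambda>s t. - t / s) (\<theta> * sqrt \<tau>) t \<partial>lborel)"
        by (rule seq_bot[OF fc fb q0 g1 \<theta> T \<tau>01(1) Tl \<tau> Y, where P="\<lambda>s t. - t / s" and B="1/s0"]) (use Pb1 m1 c1[OF sp] in auto)
      have v: "(\<integral>t. normal_density (-(q*(\<theta> * sqrt \<tau>))) 1 t * (\<lambda>s t. - t / s) (\<theta> * sqrt \<tau>) t \<partial>lborel) = q"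
      proof -
        have ne: "\<theta> * sqrt \<tau> \<noteq> 0" using sp by (metis order_less_irrefl)
        have "(\<integral>t. normal_density (-(q*(\<theta> * sqrt \<tau>))) 1 t * (\<lambda>s t. - t / s) (\<theta> * sqrt \<tau>) t \<partial>lborel)
           = - (-(q*(\<theta> * sqrt \<tau>))) / (\<theta> * sqrt \<tau>)"
          by (rule gm1[OF ne])
        also have "\<dots> = q" using ne by simp
        finally show ?thesis .
      qed
      show "(\<lambda>n. deriv (\<lambda>y. v (T n) y) (Y n) / (exp (lam * T n) * Y n powr (q - 1))) \<longlonglongrightarrow> q"
        unfolding eq using L unfolding v .
    qed
    have Lf: "uniform_limit {\<tau>0..\<tau>1} (\<lambda>y \<tau>. deriv (deriv (\<lambda>y. v \<tau> y)) y / (exp (lam * \<tau>) * y powr (q - 2))) (\<lambda>\<tau>. q * (q - 1)) (at_right 0)"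
    proof (rule unif_right0[OF compact_Icc continuous_on_const])
      fix Y T :: "nat \<Rightarrow> real" and \<tau> :: real assume T: "\<And>n. T n \<in> {\<tau>0..\<tau>1}" and Tl: "T \<longlonglongrightarrow> \<tau>" and \<tau>: "\<tau> \<in> {\<tau>0..\<tau>1}"
        and Y: "filterlim Y (at_right 0) sequentially" and Yp: "\<And>n. Y n > 0"
      have eq: "deriv (deriv (\<lambda>y. v (T n) y)) (Y n) / (exp (lam * T n) * Y n powr (q - 2)) = TT f (\<theta> * sqrt (T n)) ((\<lambda>s t. (t^2 - 1) / s^2 + t / s) (\<theta> * sqrt (T n))) (ln (Y n) - a * T n)
            * exp (-(q * (ln (Y n) - a * T n)) - q^2*(\<theta> * sqrt (T n))^2/2)" for n
      proof -
        have p: "Y n powr (q - 2) = Y n powr q / (Y n)^2" using Yp[of n] by (simp add: powr_diff)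
        have "deriv (deriv (\<lambda>y. v (T n) y)) (Y n) / (exp (lam * T n) * Y n powr (q - 2))
            = ((Y n)^2 * V2 (T n) (Y n)) / (exp (lam * T n) * Y n powr q)"
          using Yp[of n] by (simp add: dv2[OF Kpos[OF T[of n]] Yp[of n]] p field_simps)
        also have "\<dots> = TT f (\<theta> * sqrt (T n)) ((\<lambda>s t. (t^2 - 1) / s^2 + t / s) (\<theta> * sqrt (T n))) (ln (Y n) - a * T n)
            * exp (-(q * (ln (Y n) - a * T n)) - q^2*(\<theta> * sqrt (T n))^2/2)"
          unfolding E2[OF Kpos[OF T[of n]] Yp[of n]] lam_def expo_id[OF Kpos[OF T[of n]] Yp[of n]] div_exp a_def
          by simp
        finally show ?thesis .
      qed
      have sp: "\<theta> * sqrt \<tau> > 0" by (rule seq_common(4)[OF \<theta> T \<tau>01(1) Tl \<tau>])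
      have L: "(\<lambda>n. TT f (\<theta> * sqrt (T n)) ((\<lambda>s t. (t^2 - 1) / s^2 + t / s) (\<theta> * sqrt (T n))) (ln (Y n) - a * T n)
            * exp (-(q * (ln (Y n) - a * T n)) - q^2*(\<theta> * sqrt (T n))^2/2))
         \<longlonglongrightarrow> (\<integral>t. normal_density (-(q*(\<theta> * sqrt \<tau>))) 1 t * (\<lambda>s t. (t^2 - 1) / s^2 + t / s) (\<theta> * sqrt \<tau>) t \<partial>lborel)"
        by (rule seq_bot[OF fc fb q0 g1 \<theta> T \<tau>01(1) Tl \<tau> Y, where P="\<lambda>s t. (t^2 - 1) / s^2 + t / s" and B="5/s0^2 + 5/s0"])
          (use Pb2 m2 c2[OF sp] in auto)
      have v: "(\<integral>t. normal_density (-(q*(\<theta> * sqrt \<tau>))) 1 t * (\<lambda>s t. (t^2 - 1) / s^2 + t / s) (\<theta> * sqrt \<tau>) t \<partial>lborel) = q * (q - 1)"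
      proof -
        have "(\<integral>t. normal_density (-(q*(\<theta> * sqrt \<tau>))) 1 t * (\<lambda>s t. (t^2 - 1) / s^2 + t / s) (\<theta> * sqrt \<tau>) t \<partial>lborel)
          = (-(q*(\<theta> * sqrt \<tau>)))^2 / (\<theta> * sqrt \<tau>)^2 + (-(q*(\<theta> * sqrt \<tau>))) / (\<theta> * sqrt \<tau>)"
          by (rule gm2) (use sp in \<open>metis order_less_irrefl\<close>)
        also have "\<dots> = q * (q - 1)" using \<theta> Kpos[OF \<tau>] by (simp add: power2_eq_square field_simps)
        finally show ?thesis .
      qed
      show "(\<lambda>n. deriv (deriv (\<lambda>y. v (T n) y)) (Y n) / (exp (lam * T n) * Y n powr (q - 2))) \<longlonglongrightarrow> q * (q - 1)"
        unfolding eq using L unfolding v .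
    qed
    show ?thesis using La Lb Lc Ld Le Lf by blast
  qed
  show ?thesis using part1 part2 by blast
qed

end
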